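(* Let $R$ be a semilocal commutative ring in which $2$ is invertible, $I$ an ideal of $R$, and $n\ge3$. Equip $R^{2n+1}$ with the standard form of matrix $\tilde\phi_{2n+1}=(2)\perp\widetilde{\psi}_n$. Let $u\in R^{2n+1}$ be an isotropic unimodular vector and $v\in I^{2n+1}$ with $\langle u,v\rangle=0$. Then $\sigma_{u,v}\in\mathrm{EO}_{2n+1}(R,I)$.
   Context: $e_{i,j}$ are matrix units and $\widetilde{\psi}_s=\sum_{i=1}^s(e_{2i-1,2i}+e_{2i,2i-1})$. On $R^{2n+1}$ the bilinear form is $\langle a,b\rangle=a^t\tilde\phi_{2n+1}b$ and the quadratic form is $q(a)=\tfrac12\langle a,a\rangle$. For $u,v$ with $u$ unimodular, $q(u)=0$, $\langle u,v\rangle=0$ and $r=q(v)$, the Eichler–Siegel–Dickson transvection is $\sigma_{u,v}(x)=x+\langle v,x\rangle u-\langle u,x\rangle v-r\langle u,x\rangle u$. Odd elementary orthogonal group: for $N=2s+1$ and $1\le i\le s$, $F^1_i(\lambda)=I_N+\lambda(e_{1,2i+1}-2e_{2i,1}-\lambda e_{2i,2i+1})$, $F^2_i(\lambda)=I_N+\lambda(e_{1,2i}-2e_{2i+1,1}-\lambda e_{2i+1,2i})$. $\mathrm{EO}_{2s+1}(R)$ is generated by these with $\lambda\in R$, $\mathrm{EO}_{2s+1}(I)$ by those with $\lambda\in I$, and $\mathrm{EO}_{2s+1}(R,I)$ is the normal closure of $\mathrm{EO}_{2s+1}(I)$ in $\mathrm{EO}_{2s+1}(R)$. *)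

theory Defs
  imports "Jordan_Normal_Form.Matrix"
begin

definition is_ideal :: "'a::comm_ring_1 set \<Rightarrow> bool" where
  "is_ideal I \<longleftrightarrow> 0 \<in> I \<and> (\<forall>a\<in>I. \<forall>b\<in>I. a + b \<in> I) \<and> (\<forall>r. \<forall>a\<in>I. r * a \<in> I)"

definition is_maximal_ideal :: "'a::comm_ring_1 set \<Rightarrow> bool" where
  "is_maximal_ideal M \<longleftrightarrow> is_ideal M \<and> M \<noteq> UNIV \<and>
     (\<forall>J. is_ideal J \<and> M \<subseteq> J \<longrightarrow> J = M \<or> J = UNIV)"

definition semilocal :: "'a::comm_ring_1 itself \<Rightarrow> bool" where
  "semilocal _ \<longleftrightarrow> finite {M::'a set. is_maximal_ideal M}"

definition two_invertible :: "'a::comm_ring_1 itself \<Rightarrow> bool" where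
  "two_invertible _ \<longleftrightarrow> (\<exists>h::'a. 2 * h = 1)"

text \<open>The inverse of 2 (meaningful when 2 is invertible).\<close>
definition half :: "'a::comm_ring_1" where
  "half = (SOME h. 2 * h = 1)"

text \<open>Matrix unit e_{i,j} of size N, with 1-based indices i, j (entry (i-1,j-1) in 0-based JNF indexing).\<close>
definition emat :: "nat \<Rightarrow> nat \<Rightarrow> nat \<Rightarrow> 'a::comm_ring_1 mat" where
  "emat N i j = mat N N (\<lambda>(a, b). if a + 1 = i \<and> b + 1 = j then 1 else 0)"

text \<open>The form matrix phi_{2n+1} = (2) \<perp> psi_n, where psi_n = sum_{i=1}^n (e_{2i-1,2i}+e_{2i,2i-1});
  in 1-based indices of size 2n+1: entry (1,1) is 2, entries (2i,2i+1), (2i+1,2i) are 1.\<close>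
definition phi_odd :: "nat \<Rightarrow> 'a::comm_ring_1 mat" where
  "phi_odd n = mat (2*n+1) (2*n+1) (\<lambda>(a, b).
     (if a + 1 = 1 \<and> b + 1 = 1 then 2 else 0) +
     (\<Sum>i\<in>{1..n}. (if a + 1 = 2*i \<and> b + 1 = 2*i+1 then 1 else 0)
                    + (if a + 1 = 2*i+1 \<and> b + 1 = 2*i then 1 else 0)))"

definition bform :: "nat \<Rightarrow> 'a::comm_ring_1 vec \<Rightarrow> 'a vec \<Rightarrow> 'a" where
  "bform n a b = a \<bullet> (phi_odd n *\<^sub>v b)"

definition qform :: "nat \<Rightarrow> 'a::comm_ring_1 vec \<Rightarrow> 'a" where
  "qform n a = half * bform n a a"

definition unimodular :: "nat \<Rightarrow> 'a::comm_ring_1 vec \<Rightarrow> bool" where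
  "unimodular N u \<longleftrightarrow> dim_vec u = N \<and> (\<exists>w::'a vec. dim_vec w = N \<and> w \<bullet> u = 1)"

definition esd_map :: "nat \<Rightarrow> 'a::comm_ring_1 vec \<Rightarrow> 'a vec \<Rightarrow> 'a vec \<Rightarrow> 'a vec" where
  "esd_map n u v x = x + bform n v x \<cdot>\<^sub>v u - bform n u x \<cdot>\<^sub>v v
      - (qform n v * bform n u x) \<cdot>\<^sub>v u"

definition esd :: "nat \<Rightarrow> 'a::comm_ring_1 vec \<Rightarrow> 'a vec \<Rightarrow> 'a mat" where
  "esd n u v = mat (2*n+1) (2*n+1) (\<lambda>(i, j). esd_map n u v (unit_vec (2*n+1) j) $ i)"

definition F1 :: "nat \<Rightarrow> nat \<Rightarrow> 'a::comm_ring_1 \<Rightarrow> 'a mat" where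
  "F1 s i l = 1\<^sub>m (2*s+1) + l \<cdot>\<^sub>m (emat (2*s+1) 1 (2*i+1) - 2 \<cdot>\<^sub>m emat (2*s+1) (2*i) 1
                                   - l \<cdot>\<^sub>m emat (2*s+1) (2*i) (2*i+1))"

definition F2 :: "nat \<Rightarrow> nat \<Rightarrow> 'a::comm_ring_1 \<Rightarrow> 'a mat" where
  "F2 s i l = 1\<^sub>m (2*s+1) + l \<cdot>\<^sub>m (emat (2*s+1) 1 (2*i) - 2 \<cdot>\<^sub>m emat (2*s+1) (2*i+1) 1
                                   - l \<cdot>\<^sub>m emat (2*s+1) (2*i+1) (2*i))"

inductive_set EO :: "nat \<Rightarrow> 'a::comm_ring_1 set \<Rightarrow> 'a mat set" for s J where
  one: "1\<^sub>m (2*s+1) \<in> EO s J"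
| gen1: "1 \<le> i \<Longrightarrow> i \<le> s \<Longrightarrow> l \<in> J \<Longrightarrow> F1 s i l \<in> EO s J"
| gen2: "1 \<le> i \<Longrightarrow> i \<le> s \<Longrightarrow> l \<in> J \<Longrightarrow> F2 s i l \<in> EO s J"
| mult: "A \<in> EO s J \<Longrightarrow> B \<in> EO s J \<Longrightarrow> A * B \<in> EO s J"
| inv: "A \<in> EO s J \<Longrightarrow> B \<in> carrier_mat (2*s+1) (2*s+1) \<Longrightarrow>
        A * B = 1\<^sub>m (2*s+1) \<Longrightarrow> B * A = 1\<^sub>m (2*s+1) \<Longrightarrow> B \<in> EO s J"

text \<open>EO_{2s+1}(R,I): normal closure of EO_{2s+1}(I) in EO_{2s+1}(R), i.e. the subgroup generated
  by all conjugates g X g^{-1} with g in EO(R), X in EO(I).\<close>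
inductive_set EO_rel :: "nat \<Rightarrow> 'a::comm_ring_1 set \<Rightarrow> 'a mat set" for s I where
  one: "1\<^sub>m (2*s+1) \<in> EO_rel s I"
| conj: "X \<in> EO s I \<Longrightarrow> g \<in> EO s UNIV \<Longrightarrow> h \<in> carrier_mat (2*s+1) (2*s+1) \<Longrightarrow>
         g * h = 1\<^sub>m (2*s+1) \<Longrightarrow> h * g = 1\<^sub>m (2*s+1) \<Longrightarrow> g * X * h \<in> EO_rel s I"
| mult: "A \<in> EO_rel s I \<Longrightarrow> B \<in> EO_rel s I \<Longrightarrow> A * B \<in> EO_rel s I"
| inv: "A \<in> EO_rel s I \<Longrightarrow> B \<in> carrier_mat (2*s+1) (2*s+1) \<Longrightarrow>
        A * B = 1\<^sub>m (2*s+1) \<Longrightarrow> B * A = 1\<^sub>m (2*s+1) \<Longrightarrow> B \<in> EO_rel s I"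

end

theory Submission
  imports Defs
begin

declare sum.lessThan_Suc[simp del]

definition pr :: "nat \<Rightarrow> nat" where
  "pr k = (if k = 0 then 0 else if odd k then k+1 else k-1)"

definition wt :: "nat \<Rightarrow> 'a::comm_ring_1" where
  "wt k = (if k = 0 then 2 else 1)"

lemma sum_ind:
  assumes "finite A" "\<And>i. P i \<Longrightarrow> i = c"
  shows "(\<Sum>i\<in>A. if P i then (1::'a::comm_ring_1) else 0) = (if c \<in> A \<and> P c then 1 else 0)"
proof -
  have "(\<lambda>i. if P i then (1::'a) else 0) = (\<lambda>i. if i = c then (if P c then 1 else 0) else 0)"
    by (intro ext) (metis assms(2))
  then show ?thesis using assms(1) by (simp only:) (simp add: sum.delta)
qed

lemma phi_entry:
  assumes "a < 2*n+1" "b < 2*n+1"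
  shows "phi_odd n $$ (a,b) = (if b = pr a then wt a else (0::'a::comm_ring_1))"
proof -
  have s1: "(\<Sum>i\<in>{1..n}. if a + 1 = 2*i \<and> b + 1 = 2*i+1 then (1::'a) else 0)
     = (if (a+1) div 2 \<in> {1..n} \<and> a + 1 = 2*((a+1) div 2) \<and> b + 1 = 2*((a+1) div 2)+1 then 1 else 0)"
    by (rule sum_ind) auto
  have s2: "(\<Sum>i\<in>{1..n}. if a + 1 = 2*i+1 \<and> b + 1 = 2*i then (1::'a) else 0)
     = (if a div 2 \<in> {1..n} \<and> a + 1 = 2*(a div 2)+1 \<and> b + 1 = 2*(a div 2) then 1 else 0)"
    by (rule sum_ind) auto
  have "phi_odd n $$ (a,b) = (if a = 0 \<and> b = 0 then 2 else 0) +
     ((\<Sum>i\<in>{1..n}. if a + 1 = 2*i \<and> b + 1 = 2*i+1 then (1::'a) else 0) +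
      (\<Sum>i\<in>{1..n}. if a + 1 = 2*i+1 \<and> b + 1 = 2*i then (1::'a) else 0))"
    using assms unfolding phi_odd_def by (simp add: sum.distrib)
  also have "\<dots> = (if b = pr a then wt a else 0)"
  proof (cases "a = 0")
    case True then show ?thesis unfolding s1 s2 pr_def wt_def by auto
  next
    case False
    show ?thesis
    proof (cases "odd a")
      case True
      then obtain m where m: "a = 2*m+1" using oddE by blast
      show ?thesis unfolding s1 s2 pr_def wt_def using assms False True m by auto
    next
      case F2: False
      then obtain m where m: "a = 2*m" using evenE by blast
      show ?thesis unfolding s1 s2 pr_def wt_def using assms False F2 m by auto
    qed
  qed
  finally show ?thesis .
qed

lemma pr_lt: "k < 2*n+1 \<Longrightarrow> pr k < 2*n+1"
  unfolding pr_def by (auto elim!: oddE)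

lemma pr_pr[simp]: "pr (pr k) = k"
  unfolding pr_def by (auto elim!: oddE evenE)

lemma wt_pr[simp]: "wt (pr k) = wt k"
  unfolding pr_def wt_def by auto

lemma pr_eq_iff: "(pr a = pr b) = (a = b)"
  by (metis pr_pr)

lemma phi_mult:
  assumes "dim_vec y = 2*n+1" "k < 2*n+1"
  shows "(phi_odd n *\<^sub>v y) $ k = wt k * y $ pr k"
proof -
  have "(phi_odd n *\<^sub>v y) $ k = (\<Sum>j\<in>{0..<2*n+1}. phi_odd n $$ (k,j) * y $ j)"
    using assms by (simp add: phi_odd_def scalar_prod_def row_def)
  also have "\<dots> = (\<Sum>j\<in>{0..<2*n+1}. if j = pr k then wt k * y $ j else 0)"
    using assms by (intro sum.cong) (auto simp: phi_entry)
  also have "\<dots> = wt k * y $ pr k"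
    using pr_lt[OF assms(2)] by (simp add: sum.delta')
  finally show ?thesis .
qed

lemma bform_sum:
  assumes "dim_vec y = 2*n+1"
  shows "bform n x y = (\<Sum>k<2*n+1. wt k * x $ k * y $ pr k)"
proof -
  have "bform n x y = (\<Sum>k\<in>{0..<2*n+1}. x $ k * (phi_odd n *\<^sub>v y) $ k)"
    unfolding bform_def scalar_prod_def by (simp add: phi_odd_def)
  also have "\<dots> = (\<Sum>k<2*n+1. wt k * x $ k * y $ pr k)"
    using assms by (auto simp: phi_mult atLeast0LessThan intro!: sum.cong)
  finally show ?thesis .
qed

lemma sum_pr_reindex:
  "(\<Sum>k<2*n+1. f (pr k)) = (\<Sum>k<2*n+1. (f k :: 'a::comm_monoid_add))"
  by (rule sum.reindex_bij_witness[where i=pr and j=pr]) (use pr_lt[of _ n] in auto)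

lemma bform_sym:
  assumes "dim_vec x = 2*n+1" "dim_vec y = 2*n+1"
  shows "bform n x y = bform n y x"
proof -
  have "bform n x y = (\<Sum>k<2*n+1. wt (pr k) * x $ pr k * y $ pr (pr k))"
    unfolding bform_sum[OF assms(2)] by (rule sum_pr_reindex[symmetric])
  also have "\<dots> = bform n y x"
    unfolding bform_sum[OF assms(1)] by (auto simp: ac_simps intro!: sum.cong)
  finally show ?thesis .
qed

lemma bform_unit_left:
  assumes "dim_vec y = 2*n+1" "p < 2*n+1" "N = 2*n+1"
  shows "bform n (unit_vec N p) y = wt p * y $ pr p"
  unfolding bform_sum[OF assms(1)] using assms
  by (simp add: if_distrib if_distribR sum.delta cong: if_cong)

lemma bform_unit_right:
  assumes "dim_vec x = 2*n+1" "p < 2*n+1" "N = 2*n+1"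
  shows "bform n x (unit_vec N p) = wt p * x $ pr p"
  using bform_sym[OF assms(1)] bform_unit_left[OF assms(1,2)] assms by simp

lemma bform_add_left:
  assumes "dim_vec x = 2*n+1" "dim_vec x' = 2*n+1" "dim_vec y = 2*n+1"
  shows "bform n (x + x') y = bform n x y + bform n x' y"
  unfolding bform_sum[OF assms(3)] using assms
  by (simp add: sum.distrib[symmetric] algebra_simps)

lemma bform_add_right:
  assumes "dim_vec x = 2*n+1" "dim_vec y = 2*n+1" "dim_vec y' = 2*n+1"
  shows "bform n x (y + y') = bform n x y + bform n x y'"
proof -
  have "bform n x (y + y') = (\<Sum>k<2*n+1. wt k * x $ k * y $ pr k + wt k * x $ k * y' $ pr k)"
    using assms pr_lt[of _ n] by (auto simp: bform_sum algebra_simps intro!: sum.cong)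
  then show ?thesis using assms by (simp add: bform_sum sum.distrib[symmetric])
qed

lemma bform_minus_left:
  assumes "dim_vec x = 2*n+1" "dim_vec x' = 2*n+1" "dim_vec y = 2*n+1"
  shows "bform n (x - x') y = bform n x y - bform n x' y"
  unfolding bform_sum[OF assms(3)] using assms
  by (simp add: sum_subtractf[symmetric] algebra_simps)

lemma bform_minus_right:
  assumes "dim_vec x = 2*n+1" "dim_vec y = 2*n+1" "dim_vec y' = 2*n+1"
  shows "bform n x (y - y') = bform n x y - bform n x y'"
proof -
  have "bform n x (y - y') = (\<Sum>k<2*n+1. wt k * x $ k * y $ pr k - wt k * x $ k * y' $ pr k)"
    using assms pr_lt[of _ n] by (auto simp: bform_sum algebra_simps intro!: sum.cong)
  then show ?thesis using assms by (simp add: bform_sum sum_subtractf[symmetric])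
qed

lemma bform_smult_left:
  assumes "dim_vec x = 2*n+1" "dim_vec y = 2*n+1"
  shows "bform n (c \<cdot>\<^sub>v x) y = c * bform n x y"
  unfolding bform_sum[OF assms(2)] using assms
  by (simp add: sum_distrib_left algebra_simps)

lemma bform_smult_right:
  assumes "dim_vec x = 2*n+1" "dim_vec y = 2*n+1"
  shows "bform n x (c \<cdot>\<^sub>v y) = c * bform n x y"
proof -
  have "bform n x (c \<cdot>\<^sub>v y) = (\<Sum>k<2*n+1. c * (wt k * x $ k * y $ pr k))"
    using assms pr_lt[of _ n] by (auto simp: bform_sum algebra_simps intro!: sum.cong)
  then show ?thesis using assms by (simp add: bform_sum sum_distrib_left)
qed

lemma half_prop:
  assumes "two_invertible TYPE('a::comm_ring_1)"
  shows "2 * (half::'a) = 1"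
  using assms unfolding two_invertible_def half_def by (rule someI_ex)

lemma mat_eq_by_action:
  assumes "A \<in> carrier_mat m m" "B \<in> carrier_mat m m"
    and "\<And>x. dim_vec x = m \<Longrightarrow> A *\<^sub>v x = B *\<^sub>v x"
  shows "A = (B :: 'a::comm_ring_1 mat)"
proof (rule eq_matI)
  have col: "C $$ (i,j) = (C *\<^sub>v unit_vec m j) $ i" if "C \<in> carrier_mat m m" "i < m" "j < m"
    for C :: "'a mat" and i j
  proof -
    have "(C *\<^sub>v unit_vec m j) $ i = (\<Sum>k\<in>{0..<m}. C $$ (i,k) * (if k = j then 1 else 0))"
      using that by (simp add: scalar_prod_def row_def)
    also have "\<dots> = C $$ (i,j)" using that by (simp add: sum.delta' if_distrib cong: if_cong)
    finally show ?thesis by simp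
  qed
  fix i j assume "i < dim_row B" "j < dim_col B"
  then have ij: "i < m" "j < m" using assms by auto
  have "A $$ (i,j) = (A *\<^sub>v unit_vec m j) $ i" by (rule col) (use assms ij in auto)
  also have "\<dots> = (B *\<^sub>v unit_vec m j) $ i" using assms(3)[of "unit_vec m j"] by simp
  also have "\<dots> = B $$ (i,j)" by (rule col[symmetric]) (use assms ij in auto)
  finally show "A $$ (i,j) = B $$ (i,j)" .
next
  show "dim_row A = dim_row B" "dim_col A = dim_col B" using assms(1,2) by auto
qed

lemma mult_mat_vec_smult':
  assumes "A \<in> carrier_mat nr nc" "v \<in> carrier_vec nc"
  shows "A *\<^sub>v (k \<cdot>\<^sub>v v) = k \<cdot>\<^sub>v (A *\<^sub>v (v :: 'a::comm_ring_1 vec))"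
  using assms by (intro eq_vecI) (auto simp: row_def)

lemma esd_carrier: "esd n u v \<in> carrier_mat (2*n+1) (2*n+1)"
  unfolding esd_def by simp

lemma esd_dims[simp]: "dim_row (esd n u v) = 2*n+1" "dim_col (esd n u v) = 2*n+1"
  unfolding esd_def by simp_all

lemma esd_map_dim: "dim_vec x = 2*n+1 \<Longrightarrow> dim_vec u = 2*n+1 \<Longrightarrow> dim_vec v = 2*n+1
   \<Longrightarrow> dim_vec (esd_map n u v x) = 2*n+1"
  unfolding esd_map_def by simp

lemma esd_action:
  assumes u: "dim_vec u = 2*n+1" and v: "dim_vec v = 2*n+1" and x: "dim_vec x = 2*n+1"
  shows "esd n u v *\<^sub>v x = esd_map n u v x"
proof (rule eq_vecI)
  show "dim_vec (esd n u v *\<^sub>v x) = dim_vec (esd_map n u v x)"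
    using assms by (simp add: esd_def esd_map_def)
  fix i assume "i < dim_vec (esd_map n u v x)"
  then have i: "i < 2*n+1" using assms by (simp add: esd_map_def)
  let ?r = "qform n v"
  have "(esd n u v *\<^sub>v x) $ i = (\<Sum>j<2*n+1. (if j = i then x $ j else 0) + u$i * (wt j * x$j * v$pr j)
      - v$i * (wt j * x$j * u $ pr j) - ?r * u$i * (wt j * x$j * u$pr j))"
  proof -
    have e: "esd n u v $$ (i,j) = (if j = i then 1 else 0) + wt j * v$pr j * u$i - wt j * u$pr j * v$i
       - ?r * (wt j * u $ pr j) * u $ i" if "j < 2*n+1" for j
      using assms i that by (simp add: esd_def esd_map_def bform_unit_right)
    have "(esd n u v *\<^sub>v x) $ i = (\<Sum>j\<in>{0..<2*n+1}. esd n u v $$ (i,j) * x$j)"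
      using assms i by (simp add: scalar_prod_def row_def)
    then show ?thesis
      using assms i
      by (auto simp: e atLeast0LessThan algebra_simps intro!: sum.cong)
  qed
  also have "\<dots> = x $ i + u$i * bform n x v - v$i * bform n x u - ?r * u$i * bform n x u"
    using i by (simp add: sum.distrib sum_subtractf sum_distrib_left[symmetric] bform_sum u v)
  also have "\<dots> = esd_map n u v x $ i"
    using assms i by (simp add: esd_map_def bform_sym[of x n] algebra_simps)
  finally show "(esd n u v *\<^sub>v x) $ i = esd_map n u v x $ i" .
qed

definition f1v :: "nat \<Rightarrow> nat \<Rightarrow> 'a::comm_ring_1 \<Rightarrow> 'a vec \<Rightarrow> 'a vec" where
  "f1v n i l x = vec (2*n+1) (\<lambda>k. if k = 0 then x$0 + l * x$(2*i)
     else if k = 2*i-1 then x$(2*i-1) - 2*l*x$0 - l*l*x$(2*i) else x$k)"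

definition f2v :: "nat \<Rightarrow> nat \<Rightarrow> 'a::comm_ring_1 \<Rightarrow> 'a vec \<Rightarrow> 'a vec" where
  "f2v n i l x = vec (2*n+1) (\<lambda>k. if k = 0 then x$0 + l * x$(2*i-1)
     else if k = 2*i then x$(2*i) - 2*l*x$0 - l*l*x$(2*i-1) else x$k)"

lemma dim_f1v[simp]: "dim_vec (f1v n i l x) = 2*n+1" by (simp add: f1v_def)
lemma dim_f2v[simp]: "dim_vec (f2v n i l x) = 2*n+1" by (simp add: f2v_def)

lemma F1_carrier: "F1 n i l \<in> carrier_mat (2*n+1) (2*n+1)"
  unfolding F1_def emat_def carrier_mat_def by simp

lemma F2_carrier: "F2 n i l \<in> carrier_mat (2*n+1) (2*n+1)"
  unfolding F2_def emat_def carrier_mat_def by simp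

lemma F1_entry:
  assumes "a < 2*n+1" "b < 2*n+1" "1 \<le> i" "i \<le> n"
  shows "F1 n i l $$ (a,b) = (if b = a then 1 else 0)
     + (if b = 2*i then (if a = 0 then l else if a = 2*i-1 then -(l*l) else 0) else 0)
     + (if b = 0 then (if a = 2*i-1 then -(2*l) else 0) else 0)"
  using assms unfolding F1_def emat_def by auto

lemma F2_entry:
  assumes "a < 2*n+1" "b < 2*n+1" "1 \<le> i" "i \<le> n"
  shows "F2 n i l $$ (a,b) = (if b = a then 1 else 0)
     + (if b = 2*i-1 then (if a = 0 then l else if a = 2*i then -(l*l) else 0) else 0)
     + (if b = 0 then (if a = 2*i then -(2*l) else 0) else 0)"
  using assms unfolding F2_def emat_def by auto

lemma sum_delta_mult:
  "(c::nat) < m \<Longrightarrow> (\<Sum>b\<in>{0..<m}. (if b = c then t else 0) * (x b :: 'a::comm_ring_1)) = t * x c"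
proof -
  assume c: "c < m"
  have "(\<Sum>b\<in>{0..<m}. (if b = c then t else 0) * x b) = (\<Sum>b\<in>{0..<m}. if b = c then t * x c else 0)"
    by (intro sum.cong) auto
  also have "\<dots> = t * x c" using c by (subst sum.delta) auto
  finally show ?thesis .
qed

lemma F1_action:
  assumes "1 \<le> i" "i \<le> n" "dim_vec x = 2*n+1"
  shows "F1 n i l *\<^sub>v x = f1v n i l x"
proof (rule eq_vecI)
  show "dim_vec (F1 n i l *\<^sub>v x) = dim_vec (f1v n i l x)"
    using F1_carrier[of n i l] by (simp add: f1v_def)
  fix a assume "a < dim_vec (f1v n i l x)"
  then have a: "a < 2*n+1" by (simp add: f1v_def)
  have "(F1 n i l *\<^sub>v x) $ a = (\<Sum>b\<in>{0..<2*n+1}. F1 n i l $$ (a,b) * x$b)"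
    using a assms F1_carrier[of n i l] by (simp add: scalar_prod_def row_def)
  also have "\<dots> = (\<Sum>b\<in>{0..<2*n+1}. (if b = a then 1 else 0) * x$b
     + (if b = 2*i then (if a = 0 then l else if a = 2*i-1 then -(l*l) else 0) else 0) * x$b
     + (if b = 0 then (if a = 2*i-1 then -(2*l) else 0) else 0) * x$b)"
    using a assms by (intro sum.cong) (auto simp: F1_entry algebra_simps)
  also have "\<dots> = x$a + (if a = 0 then l else if a = 2*i-1 then -(l*l) else 0) * x$(2*i)
     + (if a = 2*i-1 then -(2*l) else 0) * x$0"
    using a assms by (simp only: sum.distrib sum_delta_mult) simp
  also have "\<dots> = f1v n i l x $ a"
    using a assms by (auto simp: f1v_def algebra_simps)
  finally show "(F1 n i l *\<^sub>v x) $ a = f1v n i l x $ a" .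
qed

lemma F2_action:
  assumes "1 \<le> i" "i \<le> n" "dim_vec x = 2*n+1"
  shows "F2 n i l *\<^sub>v x = f2v n i l x"
proof (rule eq_vecI)
  show "dim_vec (F2 n i l *\<^sub>v x) = dim_vec (f2v n i l x)"
    using F2_carrier[of n i l] by (simp add: f2v_def)
  fix a assume "a < dim_vec (f2v n i l x)"
  then have a: "a < 2*n+1" by (simp add: f2v_def)
  have "(F2 n i l *\<^sub>v x) $ a = (\<Sum>b\<in>{0..<2*n+1}. F2 n i l $$ (a,b) * x$b)"
    using a assms F2_carrier[of n i l] by (simp add: scalar_prod_def row_def)
  also have "\<dots> = (\<Sum>b\<in>{0..<2*n+1}. (if b = a then 1 else 0) * x$b
     + (if b = 2*i-1 then (if a = 0 then l else if a = 2*i then -(l*l) else 0) else 0) * x$b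
     + (if b = 0 then (if a = 2*i then -(2*l) else 0) else 0) * x$b)"
    using a assms by (intro sum.cong) (auto simp: F2_entry algebra_simps)
  also have "\<dots> = x$a + (if a = 0 then l else if a = 2*i then -(l*l) else 0) * x$(2*i-1)
     + (if a = 2*i then -(2*l) else 0) * x$0"
    using a assms by (simp only: sum.distrib sum_delta_mult) simp
  also have "\<dots> = f2v n i l x $ a"
    using a assms by (auto simp: f2v_def algebra_simps)
  finally show "(F2 n i l *\<^sub>v x) $ a = f2v n i l x $ a" .
qed

lemma pr_odd: "pr (2*i-1) = 2*i" if "1 \<le> i" for i :: nat
  using that unfolding pr_def by auto

lemma pr_even: "pr (2*i) = 2*i-1" if "1 \<le> i" for i :: nat
  using that unfolding pr_def by auto

lemma bform_split:
  assumes "1 \<le> i" "i \<le> n" "dim_vec y = 2*n+1"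
  shows "bform n x y = 2*x$0*y$0 + x$(2*i-1)*y$(2*i) + x$(2*i)*y$(2*i-1)
     + (\<Sum>k\<in>{..<2*n+1} - {0, 2*i-1, 2*i}. wt k * x$k * y$(pr k))"
proof -
  let ?S = "{0, 2*i-1, 2*i}"
  have sub: "?S \<subseteq> {..<2*n+1}" using assms by auto
  have "bform n x y = (\<Sum>k\<in>?S. wt k * x$k * y$(pr k)) + (\<Sum>k\<in>{..<2*n+1} - ?S. wt k * x$k * y$(pr k))"
    unfolding bform_sum[OF assms(3)] using sum.subset_diff[OF sub] by (simp add: add.commute)
  moreover have "(\<Sum>k\<in>?S. wt k * x$k * y$(pr k)) = 2*x$0*y$0 + x$(2*i-1)*y$(2*i) + x$(2*i)*y$(2*i-1)"
    using assms by (simp add: wt_def pr_def add.assoc)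
  ultimately show ?thesis by simp
qed

lemma pr_notin:
  assumes "1 \<le> i" "k \<notin> {0, 2*i-1, 2*i}"
  shows "pr k \<notin> {0, 2*i-1, (2*i::nat)}"
  using assms pr_eq_iff[of k 0] pr_eq_iff[of k "2*i"] pr_eq_iff[of k "2*i-1"] pr_odd[of i] pr_even[of i]
  by (auto simp: pr_def split: if_splits)

lemma f1v_orth:
  assumes "1 \<le> i" "i \<le> n" "dim_vec x = 2*n+1" "dim_vec y = 2*n+1"
  shows "bform n (f1v n i l x) (f1v n i l y) = bform n x y"
proof -
  have d: "dim_vec (f1v n i l y) = 2*n+1" by (simp add: f1v_def)
  have r: "(\<Sum>k\<in>{..<2*n+1} - {0, 2*i-1, 2*i}. wt k * f1v n i l x $k * f1v n i l y $(pr k))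
     = (\<Sum>k\<in>{..<2*n+1} - {0, 2*i-1, 2*i}. wt k * x$k * y$(pr k))"
  proof (intro sum.cong refl)
    fix k assume k: "k \<in> {..<2*n+1} - {0, 2*i-1, 2*i}"
    then have "pr k \<notin> {0, 2*i-1, 2*i}" using pr_notin assms by blast
    moreover have "pr k < 2*n+1" using k pr_lt by blast
    ultimately show "wt k * f1v n i l x $k * f1v n i l y $(pr k) = wt k * x$k * y$(pr k)"
      using k by (auto simp: f1v_def)
  qed
  have a: "2*i-1 < 2*n+1" "2*i < 2*n+1" "2*i-1 \<noteq> 0" "2*i \<noteq> 0" "2*i \<noteq> 2*i-1" using assms by auto
  show ?thesis
    unfolding bform_split[OF assms(1,2) d] bform_split[OF assms(1,2,4)] r
    using a by (simp add: f1v_def algebra_simps)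
qed

lemma f2v_orth:
  assumes "1 \<le> i" "i \<le> n" "dim_vec x = 2*n+1" "dim_vec y = 2*n+1"
  shows "bform n (f2v n i l x) (f2v n i l y) = bform n x y"
proof -
  have d: "dim_vec (f2v n i l y) = 2*n+1" by (simp add: f2v_def)
  have r: "(\<Sum>k\<in>{..<2*n+1} - {0, 2*i-1, 2*i}. wt k * f2v n i l x $k * f2v n i l y $(pr k))
     = (\<Sum>k\<in>{..<2*n+1} - {0, 2*i-1, 2*i}. wt k * x$k * y$(pr k))"
  proof (intro sum.cong refl)
    fix k assume k: "k \<in> {..<2*n+1} - {0, 2*i-1, 2*i}"
    then have "pr k \<notin> {0, 2*i-1, 2*i}" using pr_notin assms by blast
    moreover have "pr k < 2*n+1" using k pr_lt by blast
    ultimately show "wt k * f2v n i l x $k * f2v n i l y $(pr k) = wt k * x$k * y$(pr k)"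
      using k by (auto simp: f2v_def)
  qed
  have a: "2*i-1 < 2*n+1" "2*i < 2*n+1" "2*i-1 \<noteq> 0" "2*i \<noteq> 0" "2*i \<noteq> 2*i-1" using assms by auto
  show ?thesis
    unfolding bform_split[OF assms(1,2) d] bform_split[OF assms(1,2,4)] r
    using a by (simp add: f2v_def algebra_simps)
qed

lemma one_mv[simp]: "dim_vec x = m \<Longrightarrow> 1\<^sub>m m *\<^sub>v x = (x::'a::semiring_1 vec)"
  by (metis one_mult_mat_vec carrier_vecI)

lemma mv_assoc:
  assumes "A \<in> carrier_mat m m" "B \<in> carrier_mat m m" "dim_vec x = m"
  shows "(A * B) *\<^sub>v x = A *\<^sub>v (B *\<^sub>v x)"
proof -
  have "x \<in> carrier_vec m" using assms(3) by (rule carrier_vecI)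
  then show ?thesis using assms(1,2) by simp
qed

lemma EO_carrier: "A \<in> EO s J \<Longrightarrow> A \<in> carrier_mat (2*s+1) (2*s+1)"
proof (induction rule: EO.induct)
  case (gen1 i l) then show ?case using F1_carrier by blast
next
  case (gen2 i l) then show ?case using F2_carrier by blast
qed auto

lemma EO_orth:
  assumes "A \<in> EO n J"
  shows "dim_vec x = 2*n+1 \<Longrightarrow> dim_vec y = 2*n+1 \<Longrightarrow> bform n (A *\<^sub>v x) (A *\<^sub>v y) = bform n x y"
  using assms
proof (induction arbitrary: x y rule: EO.induct)
  case one then show ?case by (metis one_mult_mat_vec carrier_vecI)
next
  case (gen1 i l) then show ?case by (simp add: F1_action f1v_orth)
next
  case (gen2 i l) then show ?case by (simp add: F2_action f2v_orth)
next
  case (mult A B)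
  have cA: "A \<in> carrier_mat (2*n+1) (2*n+1)" and cB: "B \<in> carrier_mat (2*n+1) (2*n+1)"
    using mult EO_carrier by blast+
  have dx: "dim_vec (B *\<^sub>v x) = 2*n+1" "dim_vec (B *\<^sub>v y) = 2*n+1" using cB by auto
  have "bform n ((A * B) *\<^sub>v x) ((A * B) *\<^sub>v y) = bform n (A *\<^sub>v (B *\<^sub>v x)) (A *\<^sub>v (B *\<^sub>v y))"
    using mv_assoc[OF cA cB mult.prems(1)] mv_assoc[OF cA cB mult.prems(2)] by simp
  also have "\<dots> = bform n (B *\<^sub>v x) (B *\<^sub>v y)" by (rule mult.IH(1)[OF dx])
  also have "\<dots> = bform n x y" by (rule mult.IH(2)[OF mult.prems])
  finally show ?case .
next
  case (inv A B)
  have cA: "A \<in> carrier_mat (2*n+1) (2*n+1)" using inv EO_carrier by blast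
  have cB: "B \<in> carrier_mat (2*n+1) (2*n+1)" using inv by blast
  have dx: "dim_vec (B *\<^sub>v x) = 2*n+1" "dim_vec (B *\<^sub>v y) = 2*n+1" using cB by auto
  have "bform n (B *\<^sub>v x) (B *\<^sub>v y) = bform n (A *\<^sub>v (B *\<^sub>v x)) (A *\<^sub>v (B *\<^sub>v y))"
    by (rule inv.IH[OF dx, symmetric])
  also have "\<dots> = bform n ((A * B) *\<^sub>v x) ((A * B) *\<^sub>v y)"
    using mv_assoc[OF cA cB inv.prems(1)] mv_assoc[OF cA cB inv.prems(2)] by simp
  also have "\<dots> = bform n x y" using inv.hyps(3) inv.prems by (metis one_mult_mat_vec carrier_vecI)
  finally show ?case .
qed

lemma f1v_inv:
  assumes "1 \<le> i" "i \<le> n" "dim_vec x = 2*n+1"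
  shows "f1v n i l (f1v n i (-l) x) = x"
  using assms by (intro eq_vecI) (auto simp: f1v_def algebra_simps power2_eq_square)

lemma f2v_inv:
  assumes "1 \<le> i" "i \<le> n" "dim_vec x = 2*n+1"
  shows "f2v n i l (f2v n i (-l) x) = x"
  using assms by (intro eq_vecI) (auto simp: f2v_def algebra_simps power2_eq_square)

lemma F1_inv:
  assumes "1 \<le> i" "i \<le> n"
  shows "F1 n i l * F1 n i (-l) = 1\<^sub>m (2*n+1)"
proof (rule mat_eq_by_action)
  show "F1 n i l * F1 n i (-l) \<in> carrier_mat (2*n+1) (2*n+1)" using F1_carrier by (blast intro: mult_carrier_mat)
  fix x :: "'a vec" assume x: "dim_vec x = 2*n+1"
  have "(F1 n i l * F1 n i (-l)) *\<^sub>v x = F1 n i l *\<^sub>v (F1 n i (-l) *\<^sub>v x)"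
    using x F1_carrier by (intro mv_assoc) auto
  also have "\<dots> = x" using assms x by (simp add: F1_action[OF assms] f1v_inv)
  finally show "(F1 n i l * F1 n i (-l)) *\<^sub>v x = 1\<^sub>m (2*n+1) *\<^sub>v x" using x by simp
qed simp

lemma F2_inv:
  assumes "1 \<le> i" "i \<le> n"
  shows "F2 n i l * F2 n i (-l) = 1\<^sub>m (2*n+1)"
proof (rule mat_eq_by_action)
  show "F2 n i l * F2 n i (-l) \<in> carrier_mat (2*n+1) (2*n+1)" using F2_carrier by (blast intro: mult_carrier_mat)
  fix x :: "'a vec" assume x: "dim_vec x = 2*n+1"
  have "(F2 n i l * F2 n i (-l)) *\<^sub>v x = F2 n i l *\<^sub>v (F2 n i (-l) *\<^sub>v x)"
    using x F2_carrier by (intro mv_assoc) auto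
  also have "\<dots> = x" using assms x by (simp add: F2_action[OF assms] f2v_inv)
  finally show "(F2 n i l * F2 n i (-l)) *\<^sub>v x = 1\<^sub>m (2*n+1) *\<^sub>v x" using x by simp
qed simp

lemma massoc:
  assumes "A \<in> carrier_mat m m" "B \<in> carrier_mat m m" "C \<in> carrier_mat m m"
  shows "A * B * C = A * (B * (C :: 'a::semiring_0 mat))"
  using assms by (rule assoc_mult_mat)

lemma cancel_l:
  assumes "A * B = 1\<^sub>m m" "A \<in> carrier_mat m m" "B \<in> carrier_mat m m" "Z \<in> carrier_mat m m"
  shows "A * (B * Z) = (Z :: 'a::semiring_1 mat)"
proof -
  have "(A * B) * Z = A * (B * Z)" by (rule assoc_mult_mat) (use assms in auto)
  moreover have "(A * B) * Z = Z" using assms(1,4) by (simp add: left_mult_one_mat)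
  ultimately show ?thesis by simp
qed

lemma EO_inverse:
  assumes "A \<in> EO n J" "\<And>l. l \<in> J \<Longrightarrow> -l \<in> J"
  shows "\<exists>B\<in>EO n J. A * B = 1\<^sub>m (2*n+1) \<and> B * A = 1\<^sub>m (2*n+1)"
  using assms(1)
proof (induction rule: EO.induct)
  case one
  have o: "1\<^sub>m (2*n+1) \<in> EO n J" by (rule EO.one)
  then show ?case by (intro bexI[of _ "1\<^sub>m (2*n+1)"]) auto
next
  case (gen1 i l)
  then show ?case using F1_inv[of i n l] F1_inv[of i n "-l"] assms(2)
    by (intro bexI[of _ "F1 n i (-l)"]) (auto intro: EO.gen1)
next
  case (gen2 i l)
  then show ?case using F2_inv[of i n l] F2_inv[of i n "-l"] assms(2)
    by (intro bexI[of _ "F2 n i (-l)"]) (auto intro: EO.gen2)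
next
  case (mult A B)
  obtain A' where A': "A' \<in> EO n J" "A * A' = 1\<^sub>m (2*n+1)" "A' * A = 1\<^sub>m (2*n+1)" using mult by blast
  obtain B' where B': "B' \<in> EO n J" "B * B' = 1\<^sub>m (2*n+1)" "B' * B = 1\<^sub>m (2*n+1)" using mult by blast
  have c: "A \<in> carrier_mat (2*n+1) (2*n+1)" "B \<in> carrier_mat (2*n+1) (2*n+1)"
    "A' \<in> carrier_mat (2*n+1) (2*n+1)" "B' \<in> carrier_mat (2*n+1) (2*n+1)"
    using mult A' B' EO_carrier by blast+
  have "(A * B) * (B' * A') = A * (B * (B' * A'))" using c by (simp add: massoc[of _ "2*n+1"])
  also have "\<dots> = 1\<^sub>m (2*n+1)" using cancel_l[OF B'(2) c(2,4,3)] A'(2) by simp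
  finally have 1: "(A * B) * (B' * A') = 1\<^sub>m (2*n+1)" .
  have "(B' * A') * (A * B) = B' * (A' * (A * B))" using c by (simp add: massoc[of _ "2*n+1"])
  also have "\<dots> = 1\<^sub>m (2*n+1)" using cancel_l[OF A'(3) c(3,1,2)] B'(3) by simp
  finally have 2: "(B' * A') * (A * B) = 1\<^sub>m (2*n+1)" .
  show ?case using 1 2 A' B' by (intro bexI[of _ "B' * A'"]) (auto intro: EO.mult)
next
  case (inv A B)
  then show ?case by blast
qed

lemma EO_inverse_UNIV:
  assumes "A \<in> EO n UNIV"
  shows "\<exists>B\<in>EO n UNIV. A * B = 1\<^sub>m (2*n+1) \<and> B * A = 1\<^sub>m (2*n+1)"
  using EO_inverse[OF assms] by simp

lemma EO_rel_carrier: "A \<in> EO_rel s I \<Longrightarrow> A \<in> carrier_mat (2*s+1) (2*s+1)"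
proof (induction rule: EO_rel.induct)
  case (conj X g h) then show ?case using EO_carrier by (blast intro: mult_carrier_mat)
next
  case (mult A B) then show ?case by (blast intro: mult_carrier_mat)
next
  case (inv A B) then show ?case by blast
qed simp

lemma EO_rel_UNIV: "A \<in> EO_rel s UNIV \<Longrightarrow> A \<in> EO s UNIV"
proof (induction rule: EO_rel.induct)
  case one then show ?case by (rule EO.one)
next
  case (conj X g h)
  then have "h \<in> EO s UNIV" by (blast intro: EO.inv)
  then show ?case using conj by (blast intro: EO.mult)
next
  case (mult A B) then show ?case by (blast intro: EO.mult)
next
  case (inv A B) then show ?case by (blast intro: EO.inv)
qed

lemma EO_to_rel:
  assumes "X \<in> EO s I"
  shows "X \<in> EO_rel s I"
proof -
  have c: "X \<in> carrier_mat (2*s+1) (2*s+1)" using assms EO_carrier by blast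
  have "1\<^sub>m (2*s+1) * X * 1\<^sub>m (2*s+1) \<in> EO_rel s I"
    by (rule EO_rel.conj[OF assms EO.one]) auto
  then show ?thesis using c by (simp add: left_mult_one_mat right_mult_one_mat)
qed

lemma EO_rel_conj:
  assumes "Y \<in> EO_rel n I" "g \<in> EO n UNIV" "h \<in> carrier_mat (2*n+1) (2*n+1)"
    "g * h = 1\<^sub>m (2*n+1)" "h * g = 1\<^sub>m (2*n+1)"
  shows "g * Y * h \<in> EO_rel n I"
  using assms
proof (induction arbitrary: g h rule: EO_rel.induct)
  case one
  have cg: "g \<in> carrier_mat (2*n+1) (2*n+1)" using one EO_carrier by blast
  then have "g * 1\<^sub>m (2*n+1) * h = 1\<^sub>m (2*n+1)" using one by (simp add: right_mult_one_mat)
  moreover have "1\<^sub>m (2*n+1) \<in> EO_rel n I" by (rule EO_rel.one)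
  ultimately show ?case by simp
next
  case (conj X g' h')
  have c: "g \<in> carrier_mat (2*n+1) (2*n+1)" "g' \<in> carrier_mat (2*n+1) (2*n+1)"
    "X \<in> carrier_mat (2*n+1) (2*n+1)" using conj EO_carrier by blast+
  have e: "g * (g' * X * h') * h = (g * g') * X * (h' * h)" using c conj by (simp add: massoc[of _ "2*n+1"])
  have "(g * g') * (h' * h) = 1\<^sub>m (2*n+1)"
    using c conj cancel_l[of g' h' "2*n+1" h] by (simp add: massoc[of _ "2*n+1"])
  moreover have "(h' * h) * (g * g') = 1\<^sub>m (2*n+1)"
    using c conj cancel_l[of h g "2*n+1" g'] by (simp add: massoc[of _ "2*n+1"])
  ultimately have "(g * g') * X * (h' * h) \<in> EO_rel n I"
    using conj c by (intro EO_rel.conj) (auto intro: EO.mult)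
  then show ?case using e by simp
next
  case (mult A B)
  have c: "g \<in> carrier_mat (2*n+1) (2*n+1)" "A \<in> carrier_mat (2*n+1) (2*n+1)"
    "B \<in> carrier_mat (2*n+1) (2*n+1)" using mult EO_carrier EO_rel_carrier by blast+
  have "g * (A * B) * h = (g * A * h) * (g * B * h)"
    using c mult cancel_l[of h g "2*n+1" "B * h"] by (simp add: massoc[of _ "2*n+1"])
  moreover have "(g * A * h) * (g * B * h) \<in> EO_rel n I"
    by (rule EO_rel.mult[OF mult.IH(1)[OF mult.prems] mult.IH(2)[OF mult.prems]])
  ultimately show ?case by simp
next
  case (inv A B)
  have c: "g \<in> carrier_mat (2*n+1) (2*n+1)" "A \<in> carrier_mat (2*n+1) (2*n+1)"
    "B \<in> carrier_mat (2*n+1) (2*n+1)" using inv EO_carrier EO_rel_carrier by blast+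
  have 1: "(g * A * h) * (g * B * h) = 1\<^sub>m (2*n+1)"
    using c inv cancel_l[of h g "2*n+1" "B * h"] cancel_l[of A B "2*n+1" h] by (simp add: massoc[of _ "2*n+1"])
  have 2: "(g * B * h) * (g * A * h) = 1\<^sub>m (2*n+1)"
    using c inv cancel_l[of h g "2*n+1" "A * h"] cancel_l[of B A "2*n+1" h] by (simp add: massoc[of _ "2*n+1"])
  have ga: "g * A * h \<in> EO_rel n I" by (rule inv.IH[OF inv.prems])
  show ?case
    by (rule EO_rel.inv[OF ga _ 1 2]) (use c inv.prems in auto)
qed

lemma bform_esd_right:
  assumes "dim_vec x = 2*n+1" "dim_vec u = 2*n+1" "dim_vec w = 2*n+1"
  shows "bform n z (esd_map n u w x) = bform n z x + bform n w x * bform n z u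
     - bform n u x * bform n z w - qform n w * bform n u x * bform n z u"
proof -
  let ?a = "bform n w x" and ?b = "bform n u x" and ?c = "qform n w * bform n u x"
  have "bform n z (esd_map n u w x) = (\<Sum>k<2*n+1. wt k * z$k * x$pr k + ?a * (wt k * z$k * u$pr k)
     - ?b * (wt k * z$k * w$pr k) - ?c * (wt k * z$k * u$pr k))"
    using assms pr_lt[of _ n]
    by (auto simp: bform_sum esd_map_dim esd_map_def algebra_simps intro!: sum.cong)
  also have "\<dots> = bform n z x + ?a * bform n z u - ?b * bform n z w - ?c * bform n z u"
    using assms by (simp add: bform_sum sum.distrib sum_subtractf sum_distrib_left)
  finally show ?thesis by (simp add: algebra_simps)
qed

lemma esd_map_index:
  assumes "dim_vec x = 2*n+1" "dim_vec u = 2*n+1" "dim_vec w = 2*n+1" "k < 2*n+1"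
  shows "esd_map n u w x $ k = x$k + bform n w x * u$k - bform n u x * w$k - qform n w * bform n u x * u$k"
  using assms by (simp add: esd_map_def)

lemma qform_add:
  assumes h2: "2 * (half::'a::comm_ring_1) = 1"
    and "dim_vec v = 2*n+1" "dim_vec w = 2*n+1"
  shows "qform n (v + w) = qform n v + qform n w + bform n v (w::'a vec)"
proof -
  have d: "dim_vec (v + w) = 2*n+1" using assms by simp
  have "bform n (v + w) (v + w) = bform n v v + bform n w w + 2 * bform n v w"
    using assms d by (simp add: bform_add_left bform_add_right bform_sym[of w n v] algebra_simps)
  then have "qform n (v + w) = half * bform n v v + half * bform n w w + (2 * half) * bform n v w"
    unfolding qform_def by (simp add: algebra_simps)
  then show ?thesis using h2 by (simp add: qform_def)
qed

lemma bform_self_zero: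
  assumes h2: "2 * (half::'a::comm_ring_1) = 1" and "qform n u = (0::'a)"
  shows "bform n u u = 0"
proof -
  have "bform n u u = (2 * half) * bform n u u" using h2 by simp
  also have "\<dots> = 2 * qform n u" by (simp add: qform_def)
  finally show ?thesis using assms by simp
qed

lemma esd_add_map:
  assumes h2: "2 * (half::'a::comm_ring_1) = 1"
    and d: "dim_vec u = 2*n+1" "dim_vec v = 2*n+1" "dim_vec w = 2*n+1" "dim_vec x = 2*n+1"
    and q: "qform n u = 0" and uv: "bform n u v = 0" and uw: "bform n u w = 0"
  shows "esd_map n u v (esd_map n u w x) = esd_map n u (v + w) (x :: 'a vec)"
proof -
  let ?y = "esd_map n u w x"
  have dy: "dim_vec ?y = 2*n+1" using d by (simp add: esd_map_dim)
  have uu: "bform n u u = 0" using bform_self_zero[OF h2 q] .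
  have by1: "bform n u ?y = bform n u x"
    using bform_esd_right[OF d(4,1,3), of u] uu uw by simp
  have vu: "bform n v u = 0" using uv bform_sym[OF d(2,1)] by simp
  have by2: "bform n v ?y = bform n v x - bform n u x * bform n v w"
    using bform_esd_right[OF d(4,1,3), of v] vu by simp
  have vwx: "bform n (v + w) x = bform n v x + bform n w x" using d by (simp add: bform_add_left)
  have qvw: "qform n (v + w) = qform n v + qform n w + bform n v w" by (rule qform_add[OF h2 d(2,3)])
  show ?thesis
  proof (rule eq_vecI)
    fix k assume "k < dim_vec (esd_map n u (v + w) x)"
    then have k: "k < 2*n+1" using d by (simp add: esd_map_dim)
    have dvw: "dim_vec (v + w) = 2*n+1" using d by simp
    show "esd_map n u v ?y $ k = esd_map n u (v + w) x $ k"
      unfolding esd_map_index[OF dy d(1,2) k] esd_map_index[OF d(4,1,3) k] esd_map_index[OF d(4,1) dvw k]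
        by1 by2 vwx qvw using d k by (simp add: algebra_simps)
  qed (use d in \<open>simp add: esd_map_dim\<close>)
qed

lemma esd_triv_map:
  assumes h2: "2 * (half::'a::comm_ring_1) = 1"
    and d: "dim_vec u = 2*n+1" "dim_vec x = 2*n+1" and q: "qform n u = 0"
  shows "esd_map n u (c \<cdot>\<^sub>v u) x = (x :: 'a vec)"
proof -
  have uu: "bform n u u = 0" using bform_self_zero[OF h2 q] .
  have dc: "dim_vec (c \<cdot>\<^sub>v u) = 2*n+1" using d by simp
  have q2: "qform n (c \<cdot>\<^sub>v u) = 0"
    unfolding qform_def using d uu by (simp add: bform_smult_left bform_smult_right)
  have b: "bform n (c \<cdot>\<^sub>v u) x = c * bform n u x" using d by (simp add: bform_smult_left)
  show ?thesis
  proof (rule eq_vecI)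
    fix k assume "k < dim_vec x"
    then have k: "k < 2*n+1" using d by simp
    show "esd_map n u (c \<cdot>\<^sub>v u) x $ k = x $ k"
      unfolding esd_map_index[OF d(2,1) dc k] q2 b using d k by (simp add: algebra_simps)
  qed (use d in \<open>simp add: esd_map_dim\<close>)
qed

lemma esd_triv:
  assumes h2: "2 * (half::'a::comm_ring_1) = 1"
    and d: "dim_vec (u::'a vec) = 2*n+1" and q: "qform n u = 0"
  shows "esd n u (c \<cdot>\<^sub>v u) = 1\<^sub>m (2*n+1)"
proof (rule mat_eq_by_action)
  show "esd n u (c \<cdot>\<^sub>v u) \<in> carrier_mat (2*n+1) (2*n+1)" by (rule esd_carrier)
  fix x :: "'a vec" assume x: "dim_vec x = 2*n+1"
  have dc: "dim_vec (c \<cdot>\<^sub>v u) = 2*n+1" using d by simp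
  show "esd n u (c \<cdot>\<^sub>v u) *\<^sub>v x = 1\<^sub>m (2*n+1) *\<^sub>v x"
    using esd_action[OF d dc x] esd_triv_map[OF h2 d x q] x by simp
qed simp

lemma esd_mult:
  assumes h2: "2 * (half::'a::comm_ring_1) = 1"
    and d: "dim_vec u = 2*n+1" "dim_vec v = 2*n+1" "dim_vec w = 2*n+1"
    and q: "qform n u = 0" and uv: "bform n u v = 0" and uw: "bform n u w = 0"
  shows "esd n u v * esd n u w = esd n u (v + (w :: 'a vec))"
proof (rule mat_eq_by_action)
  show "esd n u v * esd n u w \<in> carrier_mat (2*n+1) (2*n+1)"
    using esd_carrier by (blast intro: mult_carrier_mat)
  show "esd n u (v + w) \<in> carrier_mat (2*n+1) (2*n+1)" by (rule esd_carrier)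
  fix x :: "'a vec" assume x: "dim_vec x = 2*n+1"
  have dvw: "dim_vec (v + w) = 2*n+1" using d by simp
  have dy: "dim_vec (esd_map n u w x) = 2*n+1" using d x by (simp add: esd_map_dim)
  have "(esd n u v * esd n u w) *\<^sub>v x = esd n u v *\<^sub>v (esd n u w *\<^sub>v x)"
    by (rule mv_assoc[OF esd_carrier esd_carrier x])
  also have "\<dots> = esd_map n u v (esd_map n u w x)"
    using esd_action[OF d(1,3) x] esd_action[OF d(1,2) dy] by simp
  also have "\<dots> = esd_map n u (v + w) x" by (rule esd_add_map[OF h2 d x q uv uw])
  also have "\<dots> = esd n u (v + w) *\<^sub>v x" using esd_action[OF d(1) dvw x] by simp
  finally show "(esd n u v * esd n u w) *\<^sub>v x = esd n u (v + w) *\<^sub>v x" .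
qed

lemma mult_mat_vec_minus':
  assumes "A \<in> carrier_mat m m" "dim_vec x = m" "dim_vec y = m"
  shows "A *\<^sub>v (x - y) = A *\<^sub>v x - A *\<^sub>v (y :: 'a::comm_ring_1 vec)"
  using assms by (intro mult_minus_distrib_mat_vec) (auto intro: carrier_vecI)

lemma mult_mat_vec_add':
  assumes "A \<in> carrier_mat m m" "dim_vec x = m" "dim_vec y = m"
  shows "A *\<^sub>v (x + y) = A *\<^sub>v x + A *\<^sub>v (y :: 'a::comm_ring_1 vec)"
  using assms by (intro mult_add_distrib_mat_vec) (auto intro: carrier_vecI)

lemma mult_mat_vec_smult'':
  assumes "A \<in> carrier_mat m m" "dim_vec x = m"
  shows "A *\<^sub>v (c \<cdot>\<^sub>v x) = c \<cdot>\<^sub>v (A *\<^sub>v (x :: 'a::comm_ring_1 vec))"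
  using assms by (intro mult_mat_vec_smult') (auto intro: carrier_vecI)

lemma esd_conj:
  assumes d: "dim_vec u = 2*n+1" "dim_vec v = 2*n+1"
    and g: "g \<in> carrier_mat (2*n+1) (2*n+1)" and h: "h \<in> carrier_mat (2*n+1) (2*n+1)"
    and gh: "g * h = 1\<^sub>m (2*n+1)"
    and orth: "\<And>x y. dim_vec x = 2*n+1 \<Longrightarrow> dim_vec y = 2*n+1 \<Longrightarrow>
        bform n (g *\<^sub>v x) (g *\<^sub>v y) = bform n x y"
  shows "g * esd n u v * h = esd n (g *\<^sub>v u) (g *\<^sub>v (v :: 'a::comm_ring_1 vec))"
proof (rule mat_eq_by_action)
  show "g * esd n u v * h \<in> carrier_mat (2*n+1) (2*n+1)"
    using g h esd_carrier by (blast intro: mult_carrier_mat)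
  show "esd n (g *\<^sub>v u) (g *\<^sub>v v) \<in> carrier_mat (2*n+1) (2*n+1)" by (rule esd_carrier)
  fix x :: "'a vec" assume x: "dim_vec x = 2*n+1"
  have dgu: "dim_vec (g *\<^sub>v u) = 2*n+1" "dim_vec (g *\<^sub>v v) = 2*n+1" using g by auto
  have dhx: "dim_vec (h *\<^sub>v x) = 2*n+1" using h by auto
  have ghx: "g *\<^sub>v (h *\<^sub>v x) = x" using mv_assoc[OF g h x] gh x by simp
  have e1: "bform n v (h *\<^sub>v x) = bform n (g *\<^sub>v v) x" using orth[OF d(2) dhx] ghx by simp
  have e2: "bform n u (h *\<^sub>v x) = bform n (g *\<^sub>v u) x" using orth[OF d(1) dhx] ghx by simp
  have e3: "qform n (g *\<^sub>v v) = qform n v" using orth[OF d(2) d(2)] by (simp add: qform_def)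
  have "(g * esd n u v * h) *\<^sub>v x = g *\<^sub>v (esd n u v *\<^sub>v (h *\<^sub>v x))"
    using g h x esd_carrier[of n u v] dhx
    by (simp add: mv_assoc[of _ "2*n+1"])
  also have "\<dots> = g *\<^sub>v esd_map n u v (h *\<^sub>v x)" using esd_action[OF d dhx] by simp
  also have "\<dots> = esd_map n (g *\<^sub>v u) (g *\<^sub>v v) x"
    unfolding esd_map_def e1 e2 e3
    using g d dhx ghx
    by (simp add: mult_mat_vec_minus' mult_mat_vec_add' mult_mat_vec_smult'')
  also have "\<dots> = esd n (g *\<^sub>v u) (g *\<^sub>v v) *\<^sub>v x" using esd_action[OF dgu x] by simp
  finally show "(g * esd n u v * h) *\<^sub>v x = esd n (g *\<^sub>v u) (g *\<^sub>v v) *\<^sub>v x" .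
qed

lemma bform_unit_unit:
  assumes "p < 2*n+1" "q < 2*n+1" "N = 2*n+1"
  shows "bform n (unit_vec N p) (unit_vec N q) = (if q = pr p then wt p else (0::'a::comm_ring_1))"
  using assms pr_lt[of p n] by (simp add: bform_unit_left)

lemma pr_fix: "pr q = q \<longleftrightarrow> q = 0"
  unfolding pr_def by auto

lemma qform_unit:
  assumes "q < 2*n+1" "q \<noteq> 0" "N = 2*n+1"
  shows "qform n (c \<cdot>\<^sub>v unit_vec N q) = (0::'a::comm_ring_1)"
  using assms pr_fix[of q] pr_lt[of q n] by (simp add: qform_def bform_smult_left bform_smult_right bform_unit_left)

lemma esd_unit_index:
  assumes "p < 2*n+1" "q < 2*n+1" "q \<noteq> 0" "dim_vec x = 2*n+1" "k < 2*n+1" "N = 2*n+1"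
  shows "esd_map n (unit_vec N p) (c \<cdot>\<^sub>v unit_vec N q) x $ k =
    x$k + (if k = p then c * wt q * x$pr q else 0) - (if k = q then wt p * x$pr p * c else 0)"
proof -
  have d: "dim_vec (unit_vec N p) = 2*n+1" "dim_vec (c \<cdot>\<^sub>v unit_vec N q) = (2*n+1)" using assms by auto
  show ?thesis
    unfolding esd_map_index[OF assms(4) d assms(5)] qform_unit[OF assms(2,3,6)]
    using assms by (simp add: bform_smult_left bform_unit_left)
qed

lemma esd_unit0_index:
  assumes h2: "2 * (half::'a::comm_ring_1) = 1"
  assumes "p < 2*n+1" "dim_vec (x::'a vec) = 2*n+1" "k < 2*n+1" "N = 2*n+1"
  shows "esd_map n (unit_vec N p) (c \<cdot>\<^sub>v unit_vec N 0) x $ k =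
    x$k + (if k = p then c * 2 * x$0 else 0) - (if k = 0 then wt p * x$pr p * c else 0)
     - (if k = p then c * c * (wt p * x $ pr p) else 0)"
proof -
  have d: "dim_vec (unit_vec N p) = 2*n+1" "dim_vec (c \<cdot>\<^sub>v unit_vec N 0) = (2*n+1)" using assms by auto
  have q: "qform n (c \<cdot>\<^sub>v unit_vec N 0) = c * c"
  proof -
    have "qform n (c \<cdot>\<^sub>v unit_vec N 0) = half * (c * (c * 2))"
      using assms by (simp add: qform_def bform_smult_left bform_smult_right bform_unit_left wt_def pr_def)
    also have "\<dots> = (2 * half) * (c * c)" by (simp add: algebra_simps)
    finally show ?thesis using h2 by simp
  qed
  show ?thesis
    unfolding esd_map_index[OF assms(3) d assms(4)] q
    using assms by (simp add: bform_smult_left bform_unit_left wt_def pr_def)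
qed

lemma comm_bb_vec:
  assumes "1 \<le> i" "i \<le> n" "1 \<le> j" "j \<le> n" "i \<noteq> j" "dim_vec x = 2*n+1" "N = 2*n+1"
  shows "esd_map n (unit_vec N (2*i-1)) ((-2*a) \<cdot>\<^sub>v unit_vec N (2*j-1)) x
     = f1v n i a (f1v n j 1 (f1v n i (-a) (f1v n j (-1) (x::'a::comm_ring_1 vec))))"
proof (rule eq_vecI)
  fix k assume "k < dim_vec (f1v n i a (f1v n j 1 (f1v n i (-a) (f1v n j (-1) x))))"
  then have k: "k < 2*n+1" by simp
  have f: "2*i-1 < 2*n+1" "2*j-1 < 2*n+1" "2*i < 2*n+1" "2*j < 2*n+1" "2*j-1 \<noteq> 0"
    "2*i-1 \<noteq> 2*j-1" "2*i \<noteq> 2*j" "2*i-1 \<noteq> 2*j" "2*i \<noteq> 2*j-1" "2*i-1 \<noteq> 0" "2*i \<noteq> 0" "2*j \<noteq> 0"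
    "2*i \<noteq> 2*i-1" "2*j \<noteq> 2*j-1"
    using assms by auto
  show "esd_map n (unit_vec N (2*i-1)) ((-2*a) \<cdot>\<^sub>v unit_vec N (2*j-1)) x $ k
     = f1v n i a (f1v n j 1 (f1v n i (-a) (f1v n j (-1) x))) $ k"
    unfolding esd_unit_index[OF f(1,2,5) assms(6) k assms(7)]
    using f k assms pr_odd[of i] pr_odd[of j] by (simp add: f1v_def wt_def algebra_simps)
qed (use assms in \<open>simp add: esd_map_dim\<close>)

lemma comm_bc_vec:
  assumes "1 \<le> i" "i \<le> n" "1 \<le> j" "j \<le> n" "i \<noteq> j" "dim_vec x = 2*n+1" "N = 2*n+1"
  shows "esd_map n (unit_vec N (2*i-1)) ((-2*a) \<cdot>\<^sub>v unit_vec N (2*j)) x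
     = f1v n i a (f2v n j 1 (f1v n i (-a) (f2v n j (-1) (x::'a::comm_ring_1 vec))))"
proof (rule eq_vecI)
  fix k assume "k < dim_vec (f1v n i a (f2v n j 1 (f1v n i (-a) (f2v n j (-1) x))))"
  then have k: "k < 2*n+1" by simp
  have f: "2*i-1 < 2*n+1" "2*j-1 < 2*n+1" "2*i < 2*n+1" "2*j < 2*n+1" "2*j-1 \<noteq> 0"
    "2*i-1 \<noteq> 2*j-1" "2*i \<noteq> 2*j" "2*i-1 \<noteq> 2*j" "2*i \<noteq> 2*j-1" "2*i-1 \<noteq> 0" "2*i \<noteq> 0" "2*j \<noteq> 0"
    "2*i \<noteq> 2*i-1" "2*j \<noteq> 2*j-1"
    using assms by auto
  show "esd_map n (unit_vec N (2*i-1)) ((-2*a) \<cdot>\<^sub>v unit_vec N (2*j)) x $ k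
     = f1v n i a (f2v n j 1 (f1v n i (-a) (f2v n j (-1) x))) $ k"
    unfolding esd_unit_index[OF f(1,4,12) assms(6) k assms(7)]
    using f k assms pr_odd[of i] pr_even[of j] by (simp add: f1v_def f2v_def wt_def algebra_simps)
qed (use assms in \<open>simp add: esd_map_dim\<close>)

lemma comm_cb_vec:
  assumes "1 \<le> i" "i \<le> n" "1 \<le> j" "j \<le> n" "i \<noteq> j" "dim_vec x = 2*n+1" "N = 2*n+1"
  shows "esd_map n (unit_vec N (2*i)) ((-2*a) \<cdot>\<^sub>v unit_vec N (2*j-1)) x
     = f2v n i a (f1v n j 1 (f2v n i (-a) (f1v n j (-1) (x::'a::comm_ring_1 vec))))"
proof (rule eq_vecI)
  fix k assume "k < dim_vec (f2v n i a (f1v n j 1 (f2v n i (-a) (f1v n j (-1) x))))"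
  then have k: "k < 2*n+1" by simp
  have f: "2*i-1 < 2*n+1" "2*j-1 < 2*n+1" "2*i < 2*n+1" "2*j < 2*n+1" "2*j-1 \<noteq> 0"
    "2*i-1 \<noteq> 2*j-1" "2*i \<noteq> 2*j" "2*i-1 \<noteq> 2*j" "2*i \<noteq> 2*j-1" "2*i-1 \<noteq> 0" "2*i \<noteq> 0" "2*j \<noteq> 0"
    "2*i \<noteq> 2*i-1" "2*j \<noteq> 2*j-1"
    using assms by auto
  show "esd_map n (unit_vec N (2*i)) ((-2*a) \<cdot>\<^sub>v unit_vec N (2*j-1)) x $ k
     = f2v n i a (f1v n j 1 (f2v n i (-a) (f1v n j (-1) x))) $ k"
    unfolding esd_unit_index[OF f(3,2,5) assms(6) k assms(7)]
    using f k assms pr_even[of i] pr_odd[of j] by (simp add: f2v_def f1v_def wt_def algebra_simps)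
qed (use assms in \<open>simp add: esd_map_dim\<close>)

lemma comm_cc_vec:
  assumes "1 \<le> i" "i \<le> n" "1 \<le> j" "j \<le> n" "i \<noteq> j" "dim_vec x = 2*n+1" "N = 2*n+1"
  shows "esd_map n (unit_vec N (2*i)) ((-2*a) \<cdot>\<^sub>v unit_vec N (2*j)) x
     = f2v n i a (f2v n j 1 (f2v n i (-a) (f2v n j (-1) (x::'a::comm_ring_1 vec))))"
proof (rule eq_vecI)
  fix k assume "k < dim_vec (f2v n i a (f2v n j 1 (f2v n i (-a) (f2v n j (-1) x))))"
  then have k: "k < 2*n+1" by simp
  have f: "2*i-1 < 2*n+1" "2*j-1 < 2*n+1" "2*i < 2*n+1" "2*j < 2*n+1" "2*j-1 \<noteq> 0"
    "2*i-1 \<noteq> 2*j-1" "2*i \<noteq> 2*j" "2*i-1 \<noteq> 2*j" "2*i \<noteq> 2*j-1" "2*i-1 \<noteq> 0" "2*i \<noteq> 0" "2*j \<noteq> 0"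
    "2*i \<noteq> 2*i-1" "2*j \<noteq> 2*j-1"
    using assms by auto
  show "esd_map n (unit_vec N (2*i)) ((-2*a) \<cdot>\<^sub>v unit_vec N (2*j)) x $ k
     = f2v n i a (f2v n j 1 (f2v n i (-a) (f2v n j (-1) x))) $ k"
    unfolding esd_unit_index[OF f(3,4,12) assms(6) k assms(7)]
    using f k assms pr_even[of i] pr_even[of j] by (simp add: f2v_def f2v_def wt_def algebra_simps)
qed (use assms in \<open>simp add: esd_map_dim\<close>)

lemma a_b_vec:
  assumes h2: "2 * (half::'a::comm_ring_1) = 1"
  assumes "1 \<le> i" "i \<le> n" "dim_vec x = 2*n+1" "N = 2*n+1"
  shows "esd_map n (unit_vec N (2*i-1)) (c \<cdot>\<^sub>v unit_vec N 0) x = f1v n i (-c) (x::'a vec)"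
proof (rule eq_vecI)
  fix k assume "k < dim_vec (f1v n i (-c) x)"
  then have k: "k < 2*n+1" by simp
  have f: "2*i-1 < 2*n+1" "2*i < 2*n+1" "2*i-1 \<noteq> 0" "2*i \<noteq> 0" "2*i \<noteq> 2*i-1" using assms by auto
  show "esd_map n (unit_vec N (2*i-1)) (c \<cdot>\<^sub>v unit_vec N 0) x $ k = f1v n i (-c) x $ k"
    unfolding esd_unit0_index[OF h2 f(1) assms(4) k assms(5)]
    using f k assms pr_odd[of i] by (simp add: f1v_def wt_def algebra_simps)
qed (use assms in \<open>simp add: esd_map_dim\<close>)

lemma a_c_vec:
  assumes h2: "2 * (half::'a::comm_ring_1) = 1"
  assumes "1 \<le> i" "i \<le> n" "dim_vec x = 2*n+1" "N = 2*n+1"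
  shows "esd_map n (unit_vec N (2*i)) (c \<cdot>\<^sub>v unit_vec N 0) x = f2v n i (-c) (x::'a vec)"
proof (rule eq_vecI)
  fix k assume "k < dim_vec (f2v n i (-c) x)"
  then have k: "k < 2*n+1" by simp
  have f: "2*i-1 < 2*n+1" "2*i < 2*n+1" "2*i-1 \<noteq> 0" "2*i \<noteq> 0" "2*i \<noteq> 2*i-1" using assms by auto
  show "esd_map n (unit_vec N (2*i)) (c \<cdot>\<^sub>v unit_vec N 0) x $ k = f2v n i (-c) x $ k"
    unfolding esd_unit0_index[OF h2 f(2) assms(4) k assms(5)]
    using f k assms pr_even[of i] by (simp add: f2v_def wt_def algebra_simps)
qed (use assms in \<open>simp add: esd_map_dim\<close>)

lemma mv_assoc4:
  assumes "A \<in> carrier_mat m m" "B \<in> carrier_mat m m" "C \<in> carrier_mat m m" "D \<in> carrier_mat m m"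
    "dim_vec x = m"
  shows "(A * B * C * D) *\<^sub>v x = A *\<^sub>v (B *\<^sub>v (C *\<^sub>v (D *\<^sub>v (x :: 'a::comm_ring_1 vec))))"
proof -
  have "(A * B * C * D) *\<^sub>v x = (A * B * C) *\<^sub>v (D *\<^sub>v x)"
    using assms by (intro mv_assoc) auto
  also have "\<dots> = (A * B) *\<^sub>v (C *\<^sub>v (D *\<^sub>v x))"
    using assms by (intro mv_assoc) auto
  also have "\<dots> = A *\<^sub>v (B *\<^sub>v (C *\<^sub>v (D *\<^sub>v x)))"
    using assms by (intro mv_assoc) auto
  finally show ?thesis .
qed

lemma comm_rel:
  assumes "A \<in> EO n I" "A' \<in> EO n I" "B \<in> EO n UNIV" "B' \<in> carrier_mat (2*n+1) (2*n+1)"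
    "B * B' = 1\<^sub>m (2*n+1)" "B' * B = 1\<^sub>m (2*n+1)"
  shows "A * B * A' * B' \<in> EO_rel n I"
proof -
  have c: "A \<in> carrier_mat (2*n+1) (2*n+1)" "A' \<in> carrier_mat (2*n+1) (2*n+1)"
    "B \<in> carrier_mat (2*n+1) (2*n+1)" using assms EO_carrier by blast+
  have 1: "A \<in> EO_rel n I" using assms(1) by (rule EO_to_rel)
  have 2: "B * A' * B' \<in> EO_rel n I"
    using EO_rel_conj[OF EO_to_rel[OF assms(2)] assms(3-6)] .
  have "A * B * A' * B' = A * (B * A' * B')"
    using c assms(4) by (simp add: massoc[of _ "2*n+1"])
  then show ?thesis using EO_rel.mult[OF 1 2] by simp
qed

lemma ideal_mult: "is_ideal I \<Longrightarrow> a \<in> I \<Longrightarrow> r * a \<in> I"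
  unfolding is_ideal_def by blast

lemma ideal_neg: "is_ideal I \<Longrightarrow> a \<in> I \<Longrightarrow> - a \<in> I"
  using ideal_mult[of I a "-1"] by simp

lemma bb_rel:
  assumes h2: "2 * (half::'a::comm_ring_1) = 1" and I: "is_ideal I" and cI: "c \<in> (I::'a set)"
    and ij: "1 \<le> i" "i \<le> n" "1 \<le> j" "j \<le> n" "i \<noteq> j"
  shows "esd n (unit_vec (2*n+1) (2*i-1)) (c \<cdot>\<^sub>v unit_vec (2*n+1) (2*j-1)) \<in> EO_rel n I"
proof -
  define a where "a = - (c * half)"
  have "-2 * a = c * (2 * half)" unfolding a_def by (simp add: algebra_simps)
  then have ca: "c = -2 * a" using h2 by simp
  have hc: "half * c \<in> I" by (rule ideal_mult[OF I cI])
  have aI: "a \<in> I" "- a \<in> I" unfolding a_def using hc ideal_neg[OF I hc] by (simp_all add: mult.commute)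
  have m: "esd n (unit_vec (2*n+1) (2*i-1)) ((-2*a) \<cdot>\<^sub>v unit_vec (2*n+1) (2*j-1))
      = F1 n i a * F1 n j 1 * F1 n i (-a) * F1 n j (-1)"
  proof (rule mat_eq_by_action)
    show "esd n (unit_vec (2*n+1) (2*i-1)) ((-2*a) \<cdot>\<^sub>v unit_vec (2*n+1) (2*j-1)) \<in> carrier_mat (2*n+1) (2*n+1)"
      by (rule esd_carrier)
    show "F1 n i a * F1 n j 1 * F1 n i (-a) * F1 n j (-1) \<in> carrier_mat (2*n+1) (2*n+1)"
      using F1_carrier F1_carrier by (blast intro: mult_carrier_mat)
    fix x :: "'a vec" assume x: "dim_vec x = 2*n+1"
    have d: "dim_vec (unit_vec (2*n+1) (2*i-1)) = 2*n+1" "dim_vec ((-2*a) \<cdot>\<^sub>v unit_vec (2*n+1) (2*j-1)) = 2*n+1"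
      by auto
    have "esd n (unit_vec (2*n+1) (2*i-1)) ((-2*a) \<cdot>\<^sub>v unit_vec (2*n+1) (2*j-1)) *\<^sub>v x
       = f1v n i a (f1v n j 1 (f1v n i (-a) (f1v n j (-1) x)))"
      using esd_action[OF d x] comm_bb_vec[OF ij x refl] by simp
    also have "\<dots> = (F1 n i a * F1 n j 1 * F1 n i (-a) * F1 n j (-1)) *\<^sub>v x"
      using mv_assoc4[OF F1_carrier F1_carrier F1_carrier F1_carrier x] ij x
      by (simp add: F1_action F1_action)
    finally show "esd n (unit_vec (2*n+1) (2*i-1)) ((-2*a) \<cdot>\<^sub>v unit_vec (2*n+1) (2*j-1)) *\<^sub>v x
       = (F1 n i a * F1 n j 1 * F1 n i (-a) * F1 n j (-1)) *\<^sub>v x" .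
  qed
  have "F1 n i a * F1 n j 1 * F1 n i (-a) * F1 n j (-1) \<in> EO_rel n I"
  proof (rule comm_rel)
    show "F1 n i a \<in> EO n I" using ij aI by (intro EO.gen1)
    show "F1 n i (-a) \<in> EO n I" using ij aI by (intro EO.gen1)
    show "F1 n j 1 \<in> EO n UNIV" using ij by (intro EO.gen1) auto
    show "F1 n j (-1) \<in> carrier_mat (2*n+1) (2*n+1)" by (rule F1_carrier)
    show "F1 n j 1 * F1 n j (-1) = 1\<^sub>m (2*n+1)" using F1_inv[of j n 1] ij by simp
    show "F1 n j (-1) * F1 n j 1 = 1\<^sub>m (2*n+1)" using F1_inv[of j n "-1"] ij by simp
  qed
  then show ?thesis using m ca by simp
qed

lemma bc_rel:
  assumes h2: "2 * (half::'a::comm_ring_1) = 1" and I: "is_ideal I" and cI: "c \<in> (I::'a set)"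
    and ij: "1 \<le> i" "i \<le> n" "1 \<le> j" "j \<le> n" "i \<noteq> j"
  shows "esd n (unit_vec (2*n+1) (2*i-1)) (c \<cdot>\<^sub>v unit_vec (2*n+1) (2*j)) \<in> EO_rel n I"
proof -
  define a where "a = - (c * half)"
  have "-2 * a = c * (2 * half)" unfolding a_def by (simp add: algebra_simps)
  then have ca: "c = -2 * a" using h2 by simp
  have hc: "half * c \<in> I" by (rule ideal_mult[OF I cI])
  have aI: "a \<in> I" "- a \<in> I" unfolding a_def using hc ideal_neg[OF I hc] by (simp_all add: mult.commute)
  have m: "esd n (unit_vec (2*n+1) (2*i-1)) ((-2*a) \<cdot>\<^sub>v unit_vec (2*n+1) (2*j))
      = F1 n i a * F2 n j 1 * F1 n i (-a) * F2 n j (-1)"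
  proof (rule mat_eq_by_action)
    show "esd n (unit_vec (2*n+1) (2*i-1)) ((-2*a) \<cdot>\<^sub>v unit_vec (2*n+1) (2*j)) \<in> carrier_mat (2*n+1) (2*n+1)"
      by (rule esd_carrier)
    show "F1 n i a * F2 n j 1 * F1 n i (-a) * F2 n j (-1) \<in> carrier_mat (2*n+1) (2*n+1)"
      using F1_carrier F2_carrier by (blast intro: mult_carrier_mat)
    fix x :: "'a vec" assume x: "dim_vec x = 2*n+1"
    have d: "dim_vec (unit_vec (2*n+1) (2*i-1)) = 2*n+1" "dim_vec ((-2*a) \<cdot>\<^sub>v unit_vec (2*n+1) (2*j)) = 2*n+1"
      by auto
    have "esd n (unit_vec (2*n+1) (2*i-1)) ((-2*a) \<cdot>\<^sub>v unit_vec (2*n+1) (2*j)) *\<^sub>v x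
       = f1v n i a (f2v n j 1 (f1v n i (-a) (f2v n j (-1) x)))"
      using esd_action[OF d x] comm_bc_vec[OF ij x refl] by simp
    also have "\<dots> = (F1 n i a * F2 n j 1 * F1 n i (-a) * F2 n j (-1)) *\<^sub>v x"
      using mv_assoc4[OF F1_carrier F2_carrier F1_carrier F2_carrier x] ij x
      by (simp add: F1_action F2_action)
    finally show "esd n (unit_vec (2*n+1) (2*i-1)) ((-2*a) \<cdot>\<^sub>v unit_vec (2*n+1) (2*j)) *\<^sub>v x
       = (F1 n i a * F2 n j 1 * F1 n i (-a) * F2 n j (-1)) *\<^sub>v x" .
  qed
  have "F1 n i a * F2 n j 1 * F1 n i (-a) * F2 n j (-1) \<in> EO_rel n I"
  proof (rule comm_rel)
    show "F1 n i a \<in> EO n I" using ij aI by (intro EO.gen1)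
    show "F1 n i (-a) \<in> EO n I" using ij aI by (intro EO.gen1)
    show "F2 n j 1 \<in> EO n UNIV" using ij by (intro EO.gen2) auto
    show "F2 n j (-1) \<in> carrier_mat (2*n+1) (2*n+1)" by (rule F2_carrier)
    show "F2 n j 1 * F2 n j (-1) = 1\<^sub>m (2*n+1)" using F2_inv[of j n 1] ij by simp
    show "F2 n j (-1) * F2 n j 1 = 1\<^sub>m (2*n+1)" using F2_inv[of j n "-1"] ij by simp
  qed
  then show ?thesis using m ca by simp
qed

lemma cb_rel:
  assumes h2: "2 * (half::'a::comm_ring_1) = 1" and I: "is_ideal I" and cI: "c \<in> (I::'a set)"
    and ij: "1 \<le> i" "i \<le> n" "1 \<le> j" "j \<le> n" "i \<noteq> j"
  shows "esd n (unit_vec (2*n+1) (2*i)) (c \<cdot>\<^sub>v unit_vec (2*n+1) (2*j-1)) \<in> EO_rel n I"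
proof -
  define a where "a = - (c * half)"
  have "-2 * a = c * (2 * half)" unfolding a_def by (simp add: algebra_simps)
  then have ca: "c = -2 * a" using h2 by simp
  have hc: "half * c \<in> I" by (rule ideal_mult[OF I cI])
  have aI: "a \<in> I" "- a \<in> I" unfolding a_def using hc ideal_neg[OF I hc] by (simp_all add: mult.commute)
  have m: "esd n (unit_vec (2*n+1) (2*i)) ((-2*a) \<cdot>\<^sub>v unit_vec (2*n+1) (2*j-1))
      = F2 n i a * F1 n j 1 * F2 n i (-a) * F1 n j (-1)"
  proof (rule mat_eq_by_action)
    show "esd n (unit_vec (2*n+1) (2*i)) ((-2*a) \<cdot>\<^sub>v unit_vec (2*n+1) (2*j-1)) \<in> carrier_mat (2*n+1) (2*n+1)"
      by (rule esd_carrier)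
    show "F2 n i a * F1 n j 1 * F2 n i (-a) * F1 n j (-1) \<in> carrier_mat (2*n+1) (2*n+1)"
      using F2_carrier F1_carrier by (blast intro: mult_carrier_mat)
    fix x :: "'a vec" assume x: "dim_vec x = 2*n+1"
    have d: "dim_vec (unit_vec (2*n+1) (2*i)) = 2*n+1" "dim_vec ((-2*a) \<cdot>\<^sub>v unit_vec (2*n+1) (2*j-1)) = 2*n+1"
      by auto
    have "esd n (unit_vec (2*n+1) (2*i)) ((-2*a) \<cdot>\<^sub>v unit_vec (2*n+1) (2*j-1)) *\<^sub>v x
       = f2v n i a (f1v n j 1 (f2v n i (-a) (f1v n j (-1) x)))"
      using esd_action[OF d x] comm_cb_vec[OF ij x refl] by simp
    also have "\<dots> = (F2 n i a * F1 n j 1 * F2 n i (-a) * F1 n j (-1)) *\<^sub>v x"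
      using mv_assoc4[OF F2_carrier F1_carrier F2_carrier F1_carrier x] ij x
      by (simp add: F2_action F1_action)
    finally show "esd n (unit_vec (2*n+1) (2*i)) ((-2*a) \<cdot>\<^sub>v unit_vec (2*n+1) (2*j-1)) *\<^sub>v x
       = (F2 n i a * F1 n j 1 * F2 n i (-a) * F1 n j (-1)) *\<^sub>v x" .
  qed
  have "F2 n i a * F1 n j 1 * F2 n i (-a) * F1 n j (-1) \<in> EO_rel n I"
  proof (rule comm_rel)
    show "F2 n i a \<in> EO n I" using ij aI by (intro EO.gen2)
    show "F2 n i (-a) \<in> EO n I" using ij aI by (intro EO.gen2)
    show "F1 n j 1 \<in> EO n UNIV" using ij by (intro EO.gen1) auto
    show "F1 n j (-1) \<in> carrier_mat (2*n+1) (2*n+1)" by (rule F1_carrier)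
    show "F1 n j 1 * F1 n j (-1) = 1\<^sub>m (2*n+1)" using F1_inv[of j n 1] ij by simp
    show "F1 n j (-1) * F1 n j 1 = 1\<^sub>m (2*n+1)" using F1_inv[of j n "-1"] ij by simp
  qed
  then show ?thesis using m ca by simp
qed

lemma cc_rel:
  assumes h2: "2 * (half::'a::comm_ring_1) = 1" and I: "is_ideal I" and cI: "c \<in> (I::'a set)"
    and ij: "1 \<le> i" "i \<le> n" "1 \<le> j" "j \<le> n" "i \<noteq> j"
  shows "esd n (unit_vec (2*n+1) (2*i)) (c \<cdot>\<^sub>v unit_vec (2*n+1) (2*j)) \<in> EO_rel n I"
proof -
  define a where "a = - (c * half)"
  have "-2 * a = c * (2 * half)" unfolding a_def by (simp add: algebra_simps)
  then have ca: "c = -2 * a" using h2 by simp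
  have hc: "half * c \<in> I" by (rule ideal_mult[OF I cI])
  have aI: "a \<in> I" "- a \<in> I" unfolding a_def using hc ideal_neg[OF I hc] by (simp_all add: mult.commute)
  have m: "esd n (unit_vec (2*n+1) (2*i)) ((-2*a) \<cdot>\<^sub>v unit_vec (2*n+1) (2*j))
      = F2 n i a * F2 n j 1 * F2 n i (-a) * F2 n j (-1)"
  proof (rule mat_eq_by_action)
    show "esd n (unit_vec (2*n+1) (2*i)) ((-2*a) \<cdot>\<^sub>v unit_vec (2*n+1) (2*j)) \<in> carrier_mat (2*n+1) (2*n+1)"
      by (rule esd_carrier)
    show "F2 n i a * F2 n j 1 * F2 n i (-a) * F2 n j (-1) \<in> carrier_mat (2*n+1) (2*n+1)"
      using F2_carrier F2_carrier by (blast intro: mult_carrier_mat)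
    fix x :: "'a vec" assume x: "dim_vec x = 2*n+1"
    have d: "dim_vec (unit_vec (2*n+1) (2*i)) = 2*n+1" "dim_vec ((-2*a) \<cdot>\<^sub>v unit_vec (2*n+1) (2*j)) = 2*n+1"
      by auto
    have "esd n (unit_vec (2*n+1) (2*i)) ((-2*a) \<cdot>\<^sub>v unit_vec (2*n+1) (2*j)) *\<^sub>v x
       = f2v n i a (f2v n j 1 (f2v n i (-a) (f2v n j (-1) x)))"
      using esd_action[OF d x] comm_cc_vec[OF ij x refl] by simp
    also have "\<dots> = (F2 n i a * F2 n j 1 * F2 n i (-a) * F2 n j (-1)) *\<^sub>v x"
      using mv_assoc4[OF F2_carrier F2_carrier F2_carrier F2_carrier x] ij x
      by (simp add: F2_action F2_action)
    finally show "esd n (unit_vec (2*n+1) (2*i)) ((-2*a) \<cdot>\<^sub>v unit_vec (2*n+1) (2*j)) *\<^sub>v x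
       = (F2 n i a * F2 n j 1 * F2 n i (-a) * F2 n j (-1)) *\<^sub>v x" .
  qed
  have "F2 n i a * F2 n j 1 * F2 n i (-a) * F2 n j (-1) \<in> EO_rel n I"
  proof (rule comm_rel)
    show "F2 n i a \<in> EO n I" using ij aI by (intro EO.gen2)
    show "F2 n i (-a) \<in> EO n I" using ij aI by (intro EO.gen2)
    show "F2 n j 1 \<in> EO n UNIV" using ij by (intro EO.gen2) auto
    show "F2 n j (-1) \<in> carrier_mat (2*n+1) (2*n+1)" by (rule F2_carrier)
    show "F2 n j 1 * F2 n j (-1) = 1\<^sub>m (2*n+1)" using F2_inv[of j n 1] ij by simp
    show "F2 n j (-1) * F2 n j 1 = 1\<^sub>m (2*n+1)" using F2_inv[of j n "-1"] ij by simp
  qed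
  then show ?thesis using m ca by simp
qed

lemma b0_rel:
  assumes h2: "2 * (half::'a::comm_ring_1) = 1" and I: "is_ideal I" and cI: "c \<in> (I::'a set)"
    and i: "1 \<le> i" "i \<le> n"
  shows "esd n (unit_vec (2*n+1) (2*i-1)) (c \<cdot>\<^sub>v unit_vec (2*n+1) 0) \<in> EO_rel n I"
proof -
  have m: "esd n (unit_vec (2*n+1) (2*i-1)) (c \<cdot>\<^sub>v unit_vec (2*n+1) 0) = F1 n i (-c)"
  proof (rule mat_eq_by_action)
    fix x :: "'a vec" assume x: "dim_vec x = 2*n+1"
    have d: "dim_vec (unit_vec (2*n+1) (2*i-1)) = 2*n+1" "dim_vec (c \<cdot>\<^sub>v unit_vec (2*n+1) 0) = 2*n+1"
      by auto
    show "esd n (unit_vec (2*n+1) (2*i-1)) (c \<cdot>\<^sub>v unit_vec (2*n+1) 0) *\<^sub>v x = F1 n i (-c) *\<^sub>v x"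
      using esd_action[OF d x] a_b_vec[OF h2 i x refl] F1_action[OF i x] by simp
  qed (rule esd_carrier, rule F1_carrier)
  have "F1 n i (-c) \<in> EO n I" using i ideal_neg[OF I cI] by (intro EO.gen1)
  then show ?thesis using m EO_to_rel by simp
qed

lemma c0_rel:
  assumes h2: "2 * (half::'a::comm_ring_1) = 1" and I: "is_ideal I" and cI: "c \<in> (I::'a set)"
    and i: "1 \<le> i" "i \<le> n"
  shows "esd n (unit_vec (2*n+1) (2*i)) (c \<cdot>\<^sub>v unit_vec (2*n+1) 0) \<in> EO_rel n I"
proof -
  have m: "esd n (unit_vec (2*n+1) (2*i)) (c \<cdot>\<^sub>v unit_vec (2*n+1) 0) = F2 n i (-c)"
  proof (rule mat_eq_by_action)
    fix x :: "'a vec" assume x: "dim_vec x = 2*n+1"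
    have d: "dim_vec (unit_vec (2*n+1) (2*i)) = 2*n+1" "dim_vec (c \<cdot>\<^sub>v unit_vec (2*n+1) 0) = 2*n+1"
      by auto
    show "esd n (unit_vec (2*n+1) (2*i)) (c \<cdot>\<^sub>v unit_vec (2*n+1) 0) *\<^sub>v x = F2 n i (-c) *\<^sub>v x"
      using esd_action[OF d x] a_c_vec[OF h2 i x refl] F2_action[OF i x] by simp
  qed (rule esd_carrier, rule F2_carrier)
  have "F2 n i (-c) \<in> EO n I" using i ideal_neg[OF I cI] by (intro EO.gen2)
  then show ?thesis using m EO_to_rel by simp
qed

lemma esd_unit_rel:
  assumes h2: "2 * (half::'a::comm_ring_1) = 1" and I: "is_ideal I" and cI: "c \<in> (I::'a set)"
    and p: "1 \<le> p" "p \<le> 2*n" and q: "q \<le> 2*n" "q \<noteq> p" "q \<noteq> pr p"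
  shows "esd n (unit_vec (2*n+1) p) (c \<cdot>\<^sub>v unit_vec (2*n+1) q) \<in> EO_rel n I"
proof -
  obtain i where i: "1 \<le> i" "i \<le> n" "p = 2*i-1 \<or> p = 2*i"
  proof (cases "odd p")
    case True
    then obtain m where "p = 2*m+1" by (blast elim: oddE)
    then show ?thesis using that[of "m+1"] p by auto
  next
    case False
    then obtain m where "p = 2*m" by (blast elim: evenE)
    then show ?thesis using that[of m] p by auto
  qed
  consider "q = 0" | j where "1 \<le> j" "j \<le> n" "q = 2*j-1 \<or> q = 2*j"
  proof (cases "q = 0")
    case True then show ?thesis using that by blast
  next
    case F: False
    show ?thesis
    proof (cases "odd q")
      case True
      then obtain m where "q = 2*m+1" by (blast elim: oddE)
      then show ?thesis using that(2)[of "m+1"] q by auto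
    next
      case False
      then obtain m where "q = 2*m" by (blast elim: evenE)
      then show ?thesis using that(2)[of m] q F by auto
    qed
  qed
  then show ?thesis
  proof cases
    case 1
    then show ?thesis using i b0_rel[OF h2 I cI i(1,2)] c0_rel[OF h2 I cI i(1,2)] by auto
  next
    case (2 j)
    have prp: "pr p = (if p = 2*i-1 then 2*i else 2*i-1)" using i pr_odd[of i] pr_even[of i] by auto
    have ij: "i \<noteq> j" using i 2 q prp by auto
    show ?thesis using i 2 bb_rel[OF h2 I cI i(1,2) 2(1,2) ij] bc_rel[OF h2 I cI i(1,2) 2(1,2) ij]
      cb_rel[OF h2 I cI i(1,2) 2(1,2) ij] cc_rel[OF h2 I cI i(1,2) 2(1,2) ij] by auto
  qed
qed

lemma ideal_UNIV: "is_ideal (UNIV :: 'a::comm_ring_1 set)"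
  unfolding is_ideal_def by auto

lemma esd_pivot_rel:
  assumes h2: "2 * (half::'a::comm_ring_1) = 1" and I: "is_ideal I"
    and p: "1 \<le> p" "p \<le> 2*n" and w: "dim_vec w = 2*n+1" "\<forall>k<2*n+1. w $ k \<in> (I::'a set)"
    and wp: "w $ pr p = 0"
  shows "esd n (unit_vec (2*n+1) p) w \<in> EO_rel n I"
proof -
  let ?N = "2*n+1"
  let ?u = "unit_vec ?N p :: 'a vec"
  define W where "W m = vec ?N (\<lambda>k. if k < m then w $ k else 0)" for m
  have du: "dim_vec ?u = ?N" by simp
  have prp: "pr p < ?N" "pr p \<noteq> p" using pr_lt[of p n] pr_fix[of p] p by auto
  have qu: "qform n ?u = 0"
    unfolding qform_def using p prp by (simp add: bform_unit_left)
  have dW: "dim_vec (W m) = ?N" for m unfolding W_def by simp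
  have uW: "bform n ?u (W m) = 0" for m
    using p prp wp by (simp add: bform_unit_left dW W_def)
  have "m \<le> ?N \<Longrightarrow> esd n ?u (W m) \<in> EO_rel n I" for m
  proof (induction m)
    case 0
    have "W 0 = 0 \<cdot>\<^sub>v ?u" unfolding W_def by (intro eq_vecI) auto
    then show ?case using esd_triv[OF h2 du qu, of 0] EO_rel.one by simp
  next
    case (Suc m)
    have m: "m < ?N" using Suc by simp
    let ?v = "(w $ m) \<cdot>\<^sub>v unit_vec ?N m"
    have dv: "dim_vec ?v = ?N" by simp
    have uv: "bform n ?u ?v = 0"
      using p prp wp m by (auto simp: bform_unit_left)
    have WS: "W (Suc m) = W m + ?v" unfolding W_def using m
      by (intro eq_vecI) (auto simp: less_Suc_eq)
    have e: "esd n ?u (W m) * esd n ?u ?v = esd n ?u (W (Suc m))"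
      unfolding WS by (rule esd_mult[OF h2 du dW dv qu uW uv])
    have A: "esd n ?u (W m) \<in> EO_rel n I" using Suc by simp
    have B: "esd n ?u ?v \<in> EO_rel n I"
    proof (cases "m = p \<or> m = pr p")
      case True
      then have "?v = (if m = p then w $ m else 0) \<cdot>\<^sub>v ?u" using wp by (intro eq_vecI) auto
      then show ?thesis using esd_triv[OF h2 du qu] EO_rel.one by simp
    next
      case False
      then show ?thesis using esd_unit_rel[OF h2 I _ p, of "w $ m" m] w m by auto
    qed
    show ?case using EO_rel.mult[OF A B] e by simp
  qed
  moreover have "W ?N = w" unfolding W_def using w by (intro eq_vecI) auto
  ultimately show ?thesis by (metis le_refl)
qed

lemma ideal_0: "is_ideal I \<Longrightarrow> 0 \<in> I" unfolding is_ideal_def by blast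
lemma ideal_add: "is_ideal I \<Longrightarrow> a \<in> I \<Longrightarrow> b \<in> I \<Longrightarrow> a + b \<in> I" unfolding is_ideal_def by blast
lemma ideal_mult_l: "is_ideal I \<Longrightarrow> a \<in> I \<Longrightarrow> r * a \<in> I" unfolding is_ideal_def by blast
lemma ideal_mult_r: "is_ideal I \<Longrightarrow> a \<in> I \<Longrightarrow> a * r \<in> I"
  using ideal_mult_l[of I a r] by (simp add: mult.commute)
lemma ideal_uminus: "is_ideal I \<Longrightarrow> a \<in> I \<Longrightarrow> - a \<in> I"
  using ideal_mult_l[of I a "-1"] by simp
lemma ideal_diff: "is_ideal I \<Longrightarrow> a \<in> I \<Longrightarrow> b \<in> I \<Longrightarrow> a - b \<in> I"
  using ideal_add[of I a "-b"] ideal_uminus[of I b] by simp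

lemma ideal_sum:
  assumes I: "is_ideal I" and S: "finite S" "\<And>x. x \<in> S \<Longrightarrow> f x \<in> I"
  shows "sum f S \<in> I"
  using S
proof (induction S rule: finite_induct)
  case empty then show ?case by (simp add: ideal_0[OF I])
next
  case (insert x F) then show ?case by (simp add: ideal_add[OF I])
qed

lemma max_ideal: "is_maximal_ideal M \<Longrightarrow> is_ideal M"
  unfolding is_maximal_ideal_def by blast

lemma max_one: "is_maximal_ideal M \<Longrightarrow> (1::'a::comm_ring_1) \<notin> M"
proof
  assume M: "is_maximal_ideal M" and "1 \<in> M"
  then have "r \<in> M" for r :: 'a using ideal_mult_l[OF max_ideal[OF M], of 1 r] by simp
  then show False using M unfolding is_maximal_ideal_def by blast
qed

lemma max_comax_elem:
  assumes M: "is_maximal_ideal M" and a: "(a::'a::comm_ring_1) \<notin> M"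
  shows "\<exists>m\<in>M. \<exists>r. m + r * a = 1"
proof -
  let ?J = "{m + r * a | m r. m \<in> M}"
  have iM: "is_ideal M" using M by (rule max_ideal)
  have J: "is_ideal ?J"
    unfolding is_ideal_def
  proof (intro conjI ballI allI)
    show "0 \<in> ?J" using ideal_0[OF iM] by (auto intro!: exI[of _ 0])
  next
    fix x y assume "x \<in> ?J" "y \<in> ?J"
    then obtain m1 r1 m2 r2 where "x = m1 + r1 * a" "y = m2 + r2 * a" "m1 \<in> M" "m2 \<in> M" by blast
    then show "x + y \<in> ?J" using ideal_add[OF iM]
      by (intro CollectI exI[of _ "m1 + m2"] exI[of _ "r1 + r2"]) (auto simp: algebra_simps)
  next
    fix s x assume "x \<in> ?J"
    then obtain m1 r1 where "x = m1 + r1 * a" "m1 \<in> M" by blast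
    then show "s * x \<in> ?J" using ideal_mult_l[OF iM]
      by (intro CollectI exI[of _ "s * m1"] exI[of _ "s * r1"]) (auto simp: algebra_simps)
  qed
  have sub: "M \<subseteq> ?J" by (force intro: exI[of _ 0])
  have "a \<in> ?J" using ideal_0[OF iM] by (force intro: exI[of _ 0] exI[of _ 1])
  then have "?J \<noteq> M" using a by blast
  then have "?J = UNIV" using M J sub unfolding is_maximal_ideal_def by blast
  then have "1 \<in> ?J" by simp
  then show ?thesis by auto
qed

lemma max_prime_sq:
  assumes M: "is_maximal_ideal M" and "(a::'a::comm_ring_1) * a \<in> M"
  shows "a \<in> M"
proof (rule ccontr)
  assume "a \<notin> M"
  then obtain m r where m: "m \<in> M" "m + r * a = 1" using max_comax_elem[OF M] by blast
  have "a = a * m + r * (a * a)" using m(2) by (metis mult.commute mult.left_commute mult_1_right distrib_left)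
  moreover have "a * m + r * (a * a) \<in> M"
    using ideal_add[OF max_ideal[OF M]] ideal_mult_l[OF max_ideal[OF M]] m assms(2) by blast
  ultimately show False using \<open>a \<notin> M\<close> by simp
qed

lemma max_comax:
  assumes M: "is_maximal_ideal M" and M': "is_maximal_ideal M'" and ne: "M \<noteq> M'"
  shows "\<exists>a\<in>M. \<exists>b\<in>M'. a + b = (1::'a::comm_ring_1)"
proof -
  have "\<not> M' \<subseteq> M"
  proof
    assume "M' \<subseteq> M"
    then have "M = M' \<or> M = UNIV" using M' max_ideal[OF M] unfolding is_maximal_ideal_def by blast
    then show False using ne M unfolding is_maximal_ideal_def by blast
  qed
  then obtain b where b: "b \<in> M'" "b \<notin> M" by blast
  obtain m r where "m \<in> M" "m + r * b = 1" using max_comax_elem[OF M b(2)] by blast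
  moreover have "r * b \<in> M'" using ideal_mult_l[OF max_ideal[OF M'] b(1)] .
  ultimately show ?thesis by blast
qed

lemma separate:
  assumes "finite S" "\<forall>M\<in>S. is_maximal_ideal M" "is_maximal_ideal M0" "M0 \<notin> S"
  shows "\<exists>e::'a::comm_ring_1. e - 1 \<in> M0 \<and> (\<forall>M\<in>S. e \<in> M)"
  using assms
proof (induction S rule: finite_induct)
  case empty
  then show ?case using ideal_0[OF max_ideal[OF empty(2)]] by (intro exI[of _ 1]) simp
next
  case (insert M1 S)
  then obtain e where e: "e - 1 \<in> M0" "\<forall>M\<in>S. e \<in> M" by auto
  have "M0 \<noteq> M1" using insert by auto
  then obtain a b where ab: "a \<in> M0" "b \<in> M1" "a + b = 1" using max_comax[OF insert(5)] insert(4) by blast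
  have i0: "is_ideal M0" using insert(5) by (rule max_ideal)
  have "e * b - 1 = (e - 1) * b - a" using ab(3) by (auto simp: algebra_simps)
  moreover have "(e - 1) * b - a \<in> M0" using ideal_diff[OF i0 ideal_mult_r[OF i0 e(1)] ab(1)] .
  ultimately have 1: "e * b - 1 \<in> M0" by simp
  have 2: "\<forall>M\<in>insert M1 S. e * b \<in> M"
    using e(2) insert(4) ab(2) by (auto intro: ideal_mult_r ideal_mult_l max_ideal)
  show ?case using 1 2 by blast
qed

lemma crt:
  assumes "finite S" "\<forall>M\<in>S. is_maximal_ideal M"
  shows "\<exists>t::'a::comm_ring_1. \<forall>M\<in>S. t - tau M \<in> M"
proof -
  have "\<forall>M\<in>S. \<exists>e::'a. e - 1 \<in> M \<and> (\<forall>M'\<in>S - {M}. e \<in> M')"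
    using assms by (auto intro!: separate)
  then obtain e where e: "\<And>M. M \<in> S \<Longrightarrow> e M - 1 \<in> M \<and> (\<forall>M'\<in>S - {M}. e M \<in> M')"
    by metis
  let ?t = "\<Sum>M\<in>S. tau M * e M"
  have "?t - tau M0 \<in> M0" if M0: "M0 \<in> S" for M0
  proof -
    have i0: "is_ideal M0" using assms M0 max_ideal by blast
    have "?t = tau M0 * e M0 + (\<Sum>M\<in>S - {M0}. tau M * e M)"
      using assms(1) M0 by (simp add: sum.remove)
    then have "?t - tau M0 = tau M0 * (e M0 - 1) + (\<Sum>M\<in>S - {M0}. tau M * e M)"
      by (simp add: algebra_simps)
    moreover have "tau M0 * (e M0 - 1) \<in> M0" using ideal_mult_l[OF i0] e[OF M0] by blast
    moreover have "(\<Sum>M\<in>S - {M0}. tau M * e M) \<in> M0"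
    proof (rule ideal_sum[OF i0])
      show "finite (S - {M0})" using assms(1) by simp
      fix M assume M: "M \<in> S - {M0}"
      then have "e M \<in> M0" using e[of M] M0 by auto
      then show "tau M * e M \<in> M0" by (rule ideal_mult_l[OF i0])
    qed
    ultimately show ?thesis using ideal_add[OF i0] by simp
  qed
  then show ?thesis by blast
qed

lemma unit_from_max:
  assumes "\<And>M. is_maximal_ideal M \<Longrightarrow> (x::'a::comm_ring_1) \<notin> M"
  shows "\<exists>y. x * y = 1"
proof (rule ccontr)
  assume nu: "\<not> (\<exists>y. x * y = 1)"
  let ?A = "{J::'a set. is_ideal J \<and> x \<in> J \<and> 1 \<notin> J}"
  let ?P = "{x * r | r. True}"
  have P: "?P \<in> ?A"
  proof -
    have "is_ideal ?P" unfolding is_ideal_def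
    proof (intro conjI ballI allI)
      show "0 \<in> ?P" by (auto intro: exI[of _ 0])
    next
      fix a b assume "a \<in> ?P" "b \<in> ?P"
      then obtain r s where "a = x * r" "b = x * s" by blast
      then show "a + b \<in> ?P" by (auto intro!: exI[of _ "r + s"] simp: algebra_simps)
    next
      fix t a assume "a \<in> ?P"
      then obtain r where "a = x * r" by blast
      then show "t * a \<in> ?P" by (auto intro!: exI[of _ "t * r"] simp: algebra_simps)
    qed
    moreover have "x \<in> ?P" by (auto intro: exI[of _ 1])
    moreover have "1 \<notin> ?P" using nu by auto
    ultimately show ?thesis by blast
  qed
  have "\<forall>C\<in>chains ?A. \<exists>U\<in>?A. \<forall>X\<in>C. X \<subseteq> U"
  proof
    fix C assume C: "C \<in> chains ?A"
    show "\<exists>U\<in>?A. \<forall>X\<in>C. X \<subseteq> U"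
    proof (cases "C = {}")
      case True then show ?thesis using P by blast
    next
      case False
      have CA: "C \<subseteq> ?A" and ch: "\<forall>A\<in>C. \<forall>B\<in>C. A \<subseteq> B \<or> B \<subseteq> A"
        using C unfolding chains_def chain_subset_def by auto
      have "is_ideal (\<Union>C)" unfolding is_ideal_def
      proof (intro conjI ballI allI)
        obtain J where "J \<in> C" using False by blast
        then show "0 \<in> \<Union>C" using CA ideal_0 by blast
      next
        fix a b assume "a \<in> \<Union>C" "b \<in> \<Union>C"
        then obtain J1 J2 where J: "J1 \<in> C" "J2 \<in> C" "a \<in> J1" "b \<in> J2" by blast
        then have "J1 \<subseteq> J2 \<or> J2 \<subseteq> J1" using ch by blast
        then show "a + b \<in> \<Union>C" using J CA ideal_add by blast
      next
        fix r a assume "a \<in> \<Union>C"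
        then obtain J where "J \<in> C" "a \<in> J" by blast
        then show "r * a \<in> \<Union>C" using CA ideal_mult_l by blast
      qed
      moreover have "x \<in> \<Union>C" using False CA by blast
      moreover have "1 \<notin> \<Union>C" using CA by blast
      ultimately show ?thesis by blast
    qed
  qed
  from Zorn_Lemma2[OF this] obtain M where M: "M \<in> ?A" "\<forall>X\<in>?A. M \<subseteq> X \<longrightarrow> X = M" by blast
  have "is_maximal_ideal M" unfolding is_maximal_ideal_def
  proof (intro conjI allI impI)
    show "is_ideal M" using M by blast
    show "M \<noteq> UNIV" using M by blast
    fix J assume J: "is_ideal J \<and> M \<subseteq> J"
    show "J = M \<or> J = UNIV"
    proof (cases "1 \<in> J")
      case True
      then have "r \<in> J" for r using ideal_mult_l[of J 1 r] J by simp
      then show ?thesis by blast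
    next
      case False
      then have "J \<in> ?A" using J M by blast
      then show ?thesis using M J by blast
    qed
  qed
  then show False using assms M by blast
qed

definition reach :: "nat \<Rightarrow> 'a::comm_ring_1 vec \<Rightarrow> 'a vec \<Rightarrow> bool" where
  "reach n x y \<longleftrightarrow> (\<exists>g h. g \<in> EO n UNIV \<and> h \<in> EO n UNIV \<and> g * h = 1\<^sub>m (2*n+1) \<and> h * g = 1\<^sub>m (2*n+1)
      \<and> g *\<^sub>v x = y)"

lemma reach_refl: "dim_vec x = 2*n+1 \<Longrightarrow> reach n x x"
  unfolding reach_def using EO.one by fastforce

lemma reach_trans:
  assumes "reach n x y" "reach n y z" "dim_vec x = 2*n+1"
  shows "reach n x z"
proof -
  obtain g h where g: "g \<in> EO n UNIV" "h \<in> EO n UNIV" "g * h = 1\<^sub>m (2*n+1)" "h * g = 1\<^sub>m (2*n+1)" "g *\<^sub>v x = y"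
    using assms(1) unfolding reach_def by blast
  obtain g' h' where g': "g' \<in> EO n UNIV" "h' \<in> EO n UNIV" "g' * h' = 1\<^sub>m (2*n+1)" "h' * g' = 1\<^sub>m (2*n+1)" "g' *\<^sub>v y = z"
    using assms(2) unfolding reach_def by blast
  have c: "g \<in> carrier_mat (2*n+1) (2*n+1)" "h \<in> carrier_mat (2*n+1) (2*n+1)"
    "g' \<in> carrier_mat (2*n+1) (2*n+1)" "h' \<in> carrier_mat (2*n+1) (2*n+1)"
    using g g' EO_carrier by blast+
  have "(g' * g) * (h * h') = 1\<^sub>m (2*n+1)"
    using c g g' cancel_l[of g h "2*n+1" h'] by (simp add: massoc[of _ "2*n+1"])
  moreover have "(h * h') * (g' * g) = 1\<^sub>m (2*n+1)"
    using c g g' cancel_l[of h' g' "2*n+1" g] by (simp add: massoc[of _ "2*n+1"])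
  moreover have "(g' * g) *\<^sub>v x = z" using mv_assoc[OF c(3,1) assms(3)] g g' by simp
  ultimately show ?thesis unfolding reach_def using g g' by (blast intro: EO.mult)
qed

lemma reach_sym:
  assumes "reach n x y" "dim_vec x = 2*n+1"
  shows "reach n y x"
proof -
  obtain g h where g: "g \<in> EO n UNIV" "h \<in> EO n UNIV" "g * h = 1\<^sub>m (2*n+1)" "h * g = 1\<^sub>m (2*n+1)" "g *\<^sub>v x = y"
    using assms(1) unfolding reach_def by blast
  have c: "g \<in> carrier_mat (2*n+1) (2*n+1)" "h \<in> carrier_mat (2*n+1) (2*n+1)"
    using g EO_carrier by blast+
  have "h *\<^sub>v y = x" using g(5) mv_assoc[OF c(2,1) assms(2)] g(4) assms(2) by simp
  then show ?thesis unfolding reach_def using g by blast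
qed

lemma reach_move:
  assumes h2: "2 * (half::'a::comm_ring_1) = 1"
    and p: "1 \<le> p" "p \<le> 2*n" and w: "dim_vec w = 2*n+1" "w $ pr p = 0" and x: "dim_vec x = 2*n+1"
  shows "reach n x (esd_map n (unit_vec (2*n+1) p) w (x::'a vec))"
proof -
  let ?u = "unit_vec (2*n+1) p :: 'a vec"
  let ?w' = "(-1::'a) \<cdot>\<^sub>v w"
  have du: "dim_vec ?u = 2*n+1" and dw': "dim_vec ?w' = 2*n+1" using w by auto
  have prp: "pr p < 2*n+1" "pr p \<noteq> p" using pr_lt[of p n] pr_fix[of p] p by auto
  have qu: "qform n ?u = 0" unfolding qform_def using p prp by (simp add: bform_unit_left)
  have uw: "bform n ?u w = 0" using p w prp by (simp add: bform_unit_left)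
  have uw': "bform n ?u ?w' = 0" using p w prp by (simp add: bform_unit_left)
  have g: "esd n ?u w \<in> EO n UNIV"
    using esd_pivot_rel[OF h2 ideal_UNIV p w(1) _ w(2)] EO_rel_UNIV by blast
  have w'p: "?w' $ pr p = 0" using w prp by simp
  have h: "esd n ?u ?w' \<in> EO n UNIV"
    using esd_pivot_rel[OF h2 ideal_UNIV p dw' _ w'p] EO_rel_UNIV by blast
  have z1: "w + ?w' = 0 \<cdot>\<^sub>v ?u" using w by (intro eq_vecI) auto
  have z2: "?w' + w = 0 \<cdot>\<^sub>v ?u" using w by (intro eq_vecI) auto
  have "esd n ?u w * esd n ?u ?w' = 1\<^sub>m (2*n+1)"
    using esd_mult[OF h2 du w(1) dw' qu uw uw'] z1 esd_triv[OF h2 du qu] by simp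
  moreover have "esd n ?u ?w' * esd n ?u w = 1\<^sub>m (2*n+1)"
    using esd_mult[OF h2 du dw' w(1) qu uw' uw] z2 esd_triv[OF h2 du qu] by simp
  moreover have "esd n ?u w *\<^sub>v x = esd_map n ?u w x" by (rule esd_action[OF du w(1) x])
  ultimately show ?thesis unfolding reach_def using g h by blast
qed

lemma reach_orth:
  assumes "reach n x y" "dim_vec x = 2*n+1"
  shows "bform n y y = bform n x x"
  using assms EO_orth unfolding reach_def by blast

lemma bform_in_ideal:
  assumes M: "is_ideal M" and d: "dim_vec d = 2*n+1" "dim_vec y = 2*n+1" "\<forall>k<2*n+1. d $ k \<in> M"
  shows "bform n d y \<in> M" "bform n y d \<in> M"
proof -
  show 1: "bform n d y \<in> M"
    unfolding bform_sum[OF d(2)]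
  proof (rule ideal_sum[OF M])
    fix k assume "k \<in> {..<2*n+1}"
    then have "d $ k \<in> M" using d by auto
    then show "wt k * d $ k * y $ pr k \<in> M" by (intro ideal_mult_r[OF M] ideal_mult_l[OF M])
  qed simp
  show "bform n y d \<in> M" using 1 bform_sym[OF d(1,2)] by simp
qed

lemma bform_self_split:
  assumes "dim_vec (x::'a::comm_ring_1 vec) = 2*n+1"
  shows "bform n x x = 2 * x$0 * x$0 + (\<Sum>k\<in>{1..2*n}. x$k * x$(pr k))"
proof -
  have e: "{..<2*n+1} = insert 0 {1..2*n}" by auto
  have "bform n x x = wt 0 * x$0 * x$(pr 0) + (\<Sum>k\<in>{1..2*n}. wt k * x$k * x$(pr k))"
    unfolding bform_sum[OF assms] e by (simp add: sum.insert)
  also have "\<dots> = 2 * x$0 * x$0 + (\<Sum>k\<in>{1..2*n}. x$k * x$(pr k))"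
    by (auto simp: wt_def pr_def intro!: sum.cong)
  finally show ?thesis .
qed

lemma notin_shift: "is_ideal M \<Longrightarrow> a - b \<in> M \<Longrightarrow> a \<notin> M \<Longrightarrow> b \<notin> M"
  by (metis diff_add_cancel ideal_add)

lemma transit:
  assumes h2: "2 * (half::'a::comm_ring_1) = 1"
    and sl: "finite {M::'a set. is_maximal_ideal M}"
    and n: "2 \<le> n"
    and um: "unimodular (2*n+1) (u::'a vec)" and qu: "qform n u = 0"
  shows "reach n u (unit_vec (2*n+1) 1)"
proof -
  let ?N = "2*n+1"
  let ?H = "{1..2*n}"
  let ?MM = "{M::'a set. is_maximal_ideal M}"
  have prs: "pr 1 = 2" "pr 2 = 1" "pr 3 = 4" "pr 4 = 3" "pr (Suc 0) = 2" "pr 2 = Suc 0" by (simp_all add: pr_def)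
  have wts: "wt 1 = (1::'a)" "wt 2 = (1::'a)" "wt 3 = (1::'a)" "wt 4 = (1::'a)" "wt (Suc 0) = (1::'a)"
    by (simp_all add: wt_def)
  have du: "dim_vec u = ?N" using um unfolding unimodular_def by blast
  have uu: "bform n u u = 0" by (rule bform_self_zero[OF h2 qu])
  have U3: "\<exists>k\<in>?H. u $ k \<notin> M" if M: "is_maximal_ideal M" for M
  proof (rule ccontr)
    assume "\<not> (\<exists>k\<in>?H. u $ k \<notin> M)"
    then have allH: "\<forall>k\<in>?H. u $ k \<in> M" by blast
    have iM: "is_ideal M" using M by (rule max_ideal)
    have S: "(\<Sum>k\<in>?H. u$k * u$(pr k)) \<in> M"
      using allH by (intro ideal_sum[OF iM]) (auto intro: ideal_mult_r[OF iM])
    have "2 * u$0 * u$0 = - (\<Sum>k\<in>?H. u$k * u$(pr k))"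
      using bform_self_split[OF du] uu by (simp add: eq_neg_iff_add_eq_0)
    then have "2 * u$0 * u$0 \<in> M" using ideal_uminus[OF iM S] by simp
    then have "half * (2 * u$0 * u$0) \<in> M" by (rule ideal_mult_l[OF iM])
    moreover have "half * (2 * u$0 * u$0) = (2 * half) * (u$0 * u$0)" by (simp add: algebra_simps)
    ultimately have "u$0 * u$0 \<in> M" using h2 by simp
    then have u0: "u$0 \<in> M" by (rule max_prime_sq[OF M])
    have allM: "\<forall>k<?N. u $ k \<in> M"
    proof (intro allI impI)
      fix k assume "k < ?N"
      then show "u $ k \<in> M" using allH u0 by (cases "k = 0") auto
    qed
    obtain w where w: "dim_vec w = ?N" "w \<bullet> u = 1" using um unfolding unimodular_def by blast
    have "w \<bullet> u = (\<Sum>i\<in>{0..<?N}. w $ i * u $ i)" unfolding scalar_prod_def using du by simp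
    also have "\<dots> \<in> M" using allM by (intro ideal_sum[OF iM]) (auto intro: ideal_mult_l[OF iM])
    finally show False using w(2) max_one[OF M] by simp
  qed
  define bad where "bad M \<longleftrightarrow> (\<forall>k\<in>?H. k \<noteq> 3 \<longrightarrow> u$k \<in> M)" for M
  obtain t where t: "\<forall>M\<in>?MM. t - (if bad M then 1 else 0) \<in> M"
    using crt[OF sl, of "\<lambda>M. if bad M then 1 else 0"] by auto
  define x1 where "x1 = esd_map n (unit_vec ?N 1) (t \<cdot>\<^sub>v unit_vec ?N 4) u"
  have r1: "reach n u x1" unfolding x1_def
    by (rule reach_move[OF h2 _ _ _ _ du]) (use n in \<open>auto simp: prs\<close>)
  have dx1: "dim_vec x1 = ?N" unfolding x1_def using du by (simp add: esd_map_dim)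
  have x1k: "x1 $ k = u$k + (if k = 1 then t * u$3 else 0) - (if k = 4 then u$2 * t else 0)"
    if "k < ?N" for k
    unfolding x1_def using esd_unit_index[of 1 n 4 u k ?N t] that n du by (simp add: prs wts)
  have B: "x1$4 \<notin> M \<or> (\<exists>k\<in>?H. k \<noteq> 3 \<and> k \<noteq> 4 \<and> x1$k \<notin> M)" if M: "is_maximal_ideal M" for M
  proof -
    have iM: "is_ideal M" using M by (rule max_ideal)
    have lt: "1 < ?N" "2 < ?N" "3 < ?N" "4 < ?N" using n by auto
    show ?thesis
    proof (cases "bad M")
      case True
      then have t1: "t - 1 \<in> M" using t M by auto
      have u1: "u$1 \<in> M" using True n unfolding bad_def by auto
      obtain k where k: "k \<in> ?H" "u$k \<notin> M" using U3[OF M] by blast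
      then have k3: "k = 3" using True unfolding bad_def by auto
      have "u$3 - x1$1 = - (u$1 + (t - 1) * u$3)" using x1k[OF lt(1)] by (simp add: algebra_simps)
      moreover have "u$1 + (t - 1) * u$3 \<in> M" using ideal_add[OF iM u1 ideal_mult_r[OF iM t1]] .
      ultimately have "u$3 - x1$1 \<in> M" using ideal_uminus[OF iM] by metis
      then have "x1$1 \<notin> M" using notin_shift[OF iM] k k3 by blast
      moreover have "(1::nat) \<in> ?H" using n by auto
      ultimately show ?thesis by force
    next
      case False
      then have t0: "t \<in> M" using t M by auto
      obtain k where k: "k \<in> ?H" "k \<noteq> 3" "u$k \<notin> M" using False unfolding bad_def by auto
      have kN: "k < ?N" using k by auto
      show ?thesis
      proof (cases "k = 4")
        case True
        have "u$4 - x1$4 = u$2 * t" using x1k[OF lt(4)] by simp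
        then have "u$4 - x1$4 \<in> M" using ideal_mult_l[OF iM t0] by simp
        then show ?thesis using notin_shift[OF iM] k True by blast
      next
        case F4: False
        show ?thesis
        proof (cases "k = 1")
          case True
          have "u$1 - x1$1 = - (t * u$3)" using x1k[OF lt(1)] by simp
          then have "u$1 - x1$1 \<in> M" using ideal_uminus[OF iM ideal_mult_r[OF iM t0]] by simp
          then have "x1$1 \<notin> M" using notin_shift[OF iM] k True by blast
          moreover have "(1::nat) \<in> ?H" using n by auto
          ultimately show ?thesis by force
        next
          case False
          then have "x1$k = u$k" using x1k[OF kN] F4 by simp
          then show ?thesis using k F4 by auto
        qed
      qed
    qed
  qed
  define kM where "kM M = (SOME k. k \<in> ?H \<and> k \<noteq> 3 \<and> k \<noteq> 4 \<and> x1$k \<notin> M)" for M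
  have kM: "kM M \<in> ?H \<and> kM M \<noteq> 3 \<and> kM M \<noteq> 4 \<and> x1$(kM M) \<notin> M"
    if "is_maximal_ideal M" "x1$4 \<in> M" for M
  proof -
    have "\<exists>k. k \<in> ?H \<and> k \<noteq> 3 \<and> k \<noteq> 4 \<and> x1$k \<notin> M" using B[OF that(1)] that(2) by blast
    then show ?thesis unfolding kM_def by (rule someI_ex)
  qed
  define tv where "tv M = (if x1$4 \<notin> M then 0\<^sub>v ?N else unit_vec ?N (pr (kM M)) :: 'a vec)" for M
  have "\<forall>k. \<exists>c. \<forall>M\<in>?MM. c - tv M $ k \<in> M"
  proof
    fix k show "\<exists>c. \<forall>M\<in>?MM. c - tv M $ k \<in> M" using crt[OF sl, of "\<lambda>M. tv M $ k"] by auto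
  qed
  then obtain T where T: "\<And>k M. M \<in> ?MM \<Longrightarrow> T k - tv M $ k \<in> M" by metis
  define w2 where "w2 = vec ?N (\<lambda>k. if k = 3 then 0 else T k)"
  define x2 where "x2 = esd_map n (unit_vec ?N 4) w2 x1"
  have dw2: "dim_vec w2 = ?N" unfolding w2_def by simp
  have r2: "reach n x1 x2" unfolding x2_def
    by (rule reach_move[OF h2 _ _ dw2 _ dx1]) (use n in \<open>auto simp: prs w2_def\<close>)
  have dx2: "dim_vec x2 = ?N" unfolding x2_def using dx1 dw2 by (simp add: esd_map_dim)
  have e4x1: "bform n (unit_vec ?N 4) x1 = x1$3" using bform_unit_left[of x1 n 4 "2*n+1"] dx1 n by (simp add: prs wts)
  have x24: "x2$4 = x1$4 + bform n w2 x1 - x1$3 * w2$4 - qform n w2 * x1$3"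
    unfolding x2_def using esd_map_index[of x1 n "unit_vec ?N 4" w2 4] dx1 dw2 e4x1 n by simp
  have x2unit: "x2$4 \<notin> M" if M: "is_maximal_ideal M" for M
  proof -
    have iM: "is_ideal M" using M by (rule max_ideal)
    define tau where "tau = tv M"
    have dt: "dim_vec tau = ?N" unfolding tau_def tv_def by simp
    have t3: "tau $ 3 = 0"
    proof (cases "x1$4 \<in> M")
      case True
      then have "kM M \<noteq> 4" using kM[OF M] by blast
      then have "pr (kM M) \<noteq> 3" using prs pr_pr by metis
      moreover have "pr (kM M) < ?N" using kM[OF M True] pr_lt[of "kM M" n] by auto
      ultimately show ?thesis unfolding tau_def tv_def using True n by simp
    next
      case False then show ?thesis unfolding tau_def tv_def using n by simp
    qed
    have dd: "\<forall>k<?N. (w2 - tau) $ k \<in> M"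
    proof (intro allI impI)
      fix k assume k: "k < ?N"
      show "(w2 - tau) $ k \<in> M"
      proof (cases "k = 3")
        case True then show ?thesis using k t3 dt dw2 ideal_0[OF iM] by (simp add: w2_def)
      next
        case False then show ?thesis using k dt dw2 T[of M k] M by (simp add: w2_def tau_def)
      qed
    qed
    have dwt: "dim_vec (w2 - tau) = ?N" using dw2 dt by simp
    define val where "val = x1$4 + bform n tau x1 - x1$3 * tau$4 - qform n tau * x1$3"
    have b1: "bform n w2 x1 - bform n tau x1 = bform n (w2 - tau) x1"
      using bform_minus_left[OF dw2 dt dx1] by simp
    have b2: "qform n w2 - qform n tau = half * (bform n (w2 - tau) w2 + bform n tau (w2 - tau))"
    proof -
      have e: "bform n w2 w2 - bform n tau tau = bform n (w2 - tau) w2 + bform n tau (w2 - tau)"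
        unfolding bform_minus_left[OF dw2 dt dw2] bform_minus_right[OF dt dw2 dt] by (simp add: algebra_simps)
      have "qform n w2 - qform n tau = half * (bform n w2 w2 - bform n tau tau)"
        unfolding qform_def by (simp add: right_diff_distrib)
      then show ?thesis using e by simp
    qed
    have m1: "bform n (w2 - tau) x1 \<in> M" using bform_in_ideal(1)[OF iM dwt dx1 dd] .
    have m2: "w2$4 - tau$4 \<in> M" using dd n dw2 dt by auto
    have m3: "qform n w2 - qform n tau \<in> M"
      unfolding b2 using bform_in_ideal[OF iM dwt dw2 dd] bform_in_ideal[OF iM dwt dt dd]
      by (intro ideal_mult_l[OF iM] ideal_add[OF iM]) auto
    have "x2$4 - val = bform n (w2 - tau) x1 - x1$3 * (w2$4 - tau$4) - (qform n w2 - qform n tau) * x1$3"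
      unfolding x24 val_def using b1 by (simp add: algebra_simps)
    also have "\<dots> \<in> M"
      using m1 ideal_mult_l[OF iM m2] ideal_mult_r[OF iM m3] by (intro ideal_diff[OF iM]) auto
    finally have diff: "x2$4 - val \<in> M" .
    have valM: "val \<notin> M"
    proof (cases "x1$4 \<in> M")
      case False
      then have "tau = 0\<^sub>v ?N" unfolding tau_def tv_def by simp
      then have "val = x1$4" unfolding val_def using dx1 n
        by (simp add: bform_sum qform_def)
      then show ?thesis using False by simp
    next
      case True
      let ?k = "kM M"
      have k: "?k \<in> ?H" "?k \<noteq> 3" "?k \<noteq> 4" "x1$?k \<notin> M" using kM[OF M True] by auto
      have tau_e: "tau = unit_vec ?N (pr ?k)" unfolding tau_def tv_def using True by simp
      have pr0: "pr 0 = 0" by (simp add: pr_def)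
      have prk: "pr ?k < ?N" "pr ?k \<noteq> 0" "pr ?k \<noteq> 4" "pr (pr ?k) \<noteq> pr ?k"
      proof -
        show "pr ?k < ?N" using k pr_lt[of ?k n] by auto
        show "pr ?k \<noteq> 0" using k pr0 pr_pr[of ?k] by (metis atLeastAtMost_iff not_one_le_zero)
        show "pr ?k \<noteq> 4" using k prs(4) pr_pr[of ?k] by metis
        show "pr (pr ?k) \<noteq> pr ?k" using k pr_fix[of "pr ?k"] pr0 pr_pr[of ?k] by auto
      qed
      have "bform n tau x1 = x1 $ ?k" unfolding tau_e using bform_unit_left[of x1 n "pr ?k" "2*n+1"] dx1 prk(1,2) k
        by (simp add: wt_def)
      moreover have "tau $ 4 = 0" unfolding tau_e using prk n by simp
      moreover have "qform n tau = 0" unfolding tau_e qform_def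
        using bform_unit_left[of "unit_vec ?N (pr ?k) :: 'a vec" n "pr ?k" "2*n+1"] prk pr_lt[of "pr ?k" n] by simp
      ultimately have "val = x1$4 + x1$?k" unfolding val_def by simp
      then have "x1$?k - val = - x1$4" by simp
      then have "x1$?k - val \<in> M" using ideal_uminus[OF iM True] by simp
      then show ?thesis using notin_shift[OF iM] k(4) by blast
    qed
    have "val - x2$4 \<in> M" using ideal_uminus[OF iM diff] by simp
    then show ?thesis using notin_shift[OF iM] valM by blast
  qed
  obtain y where y: "x2$4 * y = 1" using unit_from_max[of "x2$4"] x2unit by blast
  define s where "s = (1 - x2$1) * y"
  define x3 where "x3 = esd_map n (unit_vec ?N 1) (s \<cdot>\<^sub>v unit_vec ?N 3) x2"
  have r3: "reach n x2 x3" unfolding x3_def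
    by (rule reach_move[OF h2 _ _ _ _ dx2]) (use n in \<open>auto simp: prs\<close>)
  have dx3: "dim_vec x3 = ?N" unfolding x3_def using dx2 by (simp add: esd_map_dim)
  have x3k: "x3 $ k = x2$k + (if k = 1 then s * x2$4 else 0) - (if k = 3 then x2$2 * s else 0)"
    if "k < ?N" for k
    unfolding x3_def using esd_unit_index[of 1 n 3 x2 k ?N s] that n dx2 by (simp add: prs wts)
  have x31: "x3 $ 1 = 1"
  proof -
    have "x3 $ 1 = x2$1 + (1 - x2$1) * (x2$4 * y)" using x3k[of 1] n unfolding s_def by (simp add: algebra_simps)
    then show ?thesis using y by simp
  qed
  define w4 where "w4 = vec ?N (\<lambda>k. if k = 1 \<or> k = 2 then 0 else x3$k)"
  define x4 where "x4 = esd_map n (unit_vec ?N 2) w4 x3"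
  have dw4: "dim_vec w4 = ?N" unfolding w4_def by simp
  have r4: "reach n x3 x4" unfolding x4_def
    by (rule reach_move[OF h2 _ _ dw4 _ dx3]) (use n in \<open>auto simp: prs w4_def\<close>)
  have dx4: "dim_vec x4 = ?N" unfolding x4_def using dx3 dw4 by (simp add: esd_map_dim)
  have e2x3: "bform n (unit_vec ?N 2) x3 = 1" using bform_unit_left[of x3 n 2 "2*n+1"] dx3 n x31
    by (simp add: prs wts)
  have x4k: "x4 $ k = (if k = 1 then 1 else 0)" if "k < ?N" "k \<noteq> 2" for k
  proof -
    have "x4 $ k = x3$k - w4$k"
      unfolding x4_def using esd_map_index[of x3 n "unit_vec ?N 2" w4 k] dx3 dw4 e2x3 that n by simp
    then show ?thesis using that x31 by (simp add: w4_def)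
  qed
  have ru4: "reach n u x4"
    using reach_trans[OF reach_trans[OF reach_trans[OF r1 r2 du] r3 du] r4 du] .
  have b4: "bform n x4 x4 = 0" using reach_orth[OF ru4 du] uu by simp
  define g where "g = x4 $ 2"
  have "(\<Sum>k\<in>?H. x4$k * x4$(pr k)) = (\<Sum>k\<in>?H. (if k = 1 then g else 0) + (if k = 2 then g else 0))"
  proof (intro sum.cong refl)
    fix k assume k: "k \<in> ?H"
    then have kN: "k < ?N" "pr k < ?N" using pr_lt[of k n] by auto
    show "x4$k * x4$(pr k) = (if k = 1 then g else 0) + (if k = 2 then g else 0)"
    proof (cases "k = 1 \<or> k = 2")
      case True then show ?thesis using x4k[of 1] x4k[of 2] n prs unfolding g_def by auto
    next
      case False then show ?thesis using x4k[OF kN(1)] by auto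
    qed
  qed
  also have "\<dots> = g + g" using n by (simp add: sum.distrib)
  finally have "bform n x4 x4 = 2 * x4$0 * x4$0 + (g + g)" using bform_self_split[OF dx4] by simp
  moreover have "x4$0 = 0" using x4k[of 0] by simp
  ultimately have "g + g = 0" using b4 by simp
  then have "(2 * half) * g = 0" by (simp add: algebra_simps mult_2[symmetric] mult.assoc)
  then have g0: "g = 0" using h2 by simp
  have "x4 = unit_vec ?N 1"
  proof (rule eq_vecI)
    fix k assume "k < dim_vec (unit_vec ?N 1 :: 'a vec)"
    then have k: "k < ?N" by simp
    show "x4 $ k = unit_vec ?N 1 $ k"
      using x4k[OF k] k g0 n unfolding g_def by (cases "k = 2") auto
  qed (use dx4 in simp)
  then show ?thesis using ru4 by simp
qed

theorem mainTheorem9: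
  fixes I :: "'a::comm_ring_1 set" and n :: nat and u v :: "'a vec"
  assumes "semilocal TYPE('a)"
    and "two_invertible TYPE('a)"
    and "is_ideal I"
    and "n \<ge> 3"
    and "unimodular (2*n+1) u"
    and "qform n u = 0"
    and "dim_vec v = 2*n+1"
    and "\<forall>i < 2*n+1. v $ i \<in> I"
    and "bform n u v = 0"
  shows "esd n u v \<in> EO_rel n I"
proof -
  let ?N = "2*n+1"
  have h2: "2 * (half::'a) = 1" using half_prop[OF assms(2)] .
  have sl: "finite {M::'a set. is_maximal_ideal M}" using assms(1) unfolding semilocal_def .
  have n2: "2 \<le> n" using assms(4) by simp
  have I: "is_ideal I" using assms(3) .
  have du: "dim_vec u = ?N" using assms(5) unfolding unimodular_def by blast
  have dv: "dim_vec v = ?N" using assms(7) .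
  have "reach n u (unit_vec ?N 1)" by (rule transit[OF h2 sl n2 assms(5,6)])
  then obtain g h where gh: "g \<in> EO n UNIV" "h \<in> EO n UNIV" "g * h = 1\<^sub>m ?N" "h * g = 1\<^sub>m ?N"
    "g *\<^sub>v u = unit_vec ?N 1"
    unfolding reach_def by blast
  have cg: "g \<in> carrier_mat ?N ?N" and ch: "h \<in> carrier_mat ?N ?N" using gh EO_carrier by blast+
  have hu: "h *\<^sub>v unit_vec ?N 1 = u" using gh(5) mv_assoc[OF ch cg du] gh(4) du by simp
  let ?v' = "g *\<^sub>v v"
  have dv': "dim_vec ?v' = ?N" using cg by simp
  have v'I: "\<forall>k<?N. ?v' $ k \<in> I"
  proof (intro allI impI)
    fix k assume k: "k < ?N"
    have "?v' $ k = (\<Sum>j\<in>{0..<?N}. g $$ (k,j) * v $ j)"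
      using k cg dv by (simp add: scalar_prod_def row_def)
    also have "\<dots> \<in> I" using assms(8) by (intro ideal_sum[OF I]) (auto intro: ideal_mult_l[OF I])
    finally show "?v' $ k \<in> I" .
  qed
  have orthg: "\<And>x y. dim_vec x = ?N \<Longrightarrow> dim_vec y = ?N \<Longrightarrow> bform n (g *\<^sub>v x) (g *\<^sub>v y) = bform n x y"
    using EO_orth[OF gh(1)] by blast
  have orthh: "\<And>x y. dim_vec x = ?N \<Longrightarrow> dim_vec y = ?N \<Longrightarrow> bform n (h *\<^sub>v x) (h *\<^sub>v y) = bform n x y"
    using EO_orth[OF gh(2)] by blast
  have "bform n (unit_vec ?N 1) ?v' = 0" using orthg[OF du dv] gh(5) assms(9) by simp
  moreover have p1: "pr 1 = 2" by (simp add: pr_def)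
  moreover have w1: "wt 1 = (1::'a)" by (simp add: wt_def)
  moreover have "bform n (unit_vec ?N 1) ?v' = wt 1 * ?v' $ pr 1"
    using bform_unit_left[of ?v' n 1 ?N] dv' n2 by simp
  ultimately have v'2: "?v' $ pr 1 = 0" by simp
  have X: "esd n (unit_vec ?N 1) ?v' \<in> EO_rel n I"
    using esd_pivot_rel[OF h2 I _ _ dv' v'I v'2] n2 by simp
  have "h * esd n (unit_vec ?N 1) ?v' * g \<in> EO_rel n I"
    by (rule EO_rel_conj[OF X gh(2) cg gh(4,3)])
  moreover have "h * esd n (unit_vec ?N 1) ?v' * g = esd n (h *\<^sub>v unit_vec ?N 1) (h *\<^sub>v ?v')"
    by (rule esd_conj[OF _ dv' ch cg gh(4) orthh]) simp
  moreover have "h *\<^sub>v ?v' = v" using mv_assoc[OF ch cg dv] gh(4) dv by simp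
  ultimately show ?thesis using hu by simp
qed

end
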